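(* Let $D=\{z_i=(x_i,y_i)\}_{i=1}^m$ be a training set with $x_i\in\mathbb{R}^p$, $y_i\in\mathbb{R}$, and let $\mathcal{D}_X$ be the empirical distribution of $x_1,\dots,x_m$. Let $f_\theta$ and $h$ be twice differentiable and let $l(\theta,z)=h(f_\theta(x))-yf_\theta(x)$. Fix $n\ge2$ and $\pmb\alpha=(\alpha_1,\dots,\alpha_n)$ with $\alpha_k>0$, and define the $n$-Mixup loss $$L^{\text{n-mix}}_m(\theta)=\frac{1}{m^n}\sum_{\mathbf{i}=(i_1,\dots,i_n)\in[m]^n}\mathbb{E}_{\pmb\lambda\sim\mathrm{Dir}(\pmb\alpha)}\,l\Big(\theta,\Big(\sum_{k=1}^n\lambda_kx_{i_k},\ \sum_{k=1}^n\lambda_ky_{i_k}\Big)\Big).$$ Let $\tilde{\mathcal{D}}_\Lambda=\sum_{l=1}^n\frac{\alpha_l}{\sum_{i}\alpha_i}\mathrm{Dir}(\alpha_l+1,\alpha_{l+1},\dots,\alpha_{l+n-1})$ (indices taken mod $n$), and let $L_m(\theta)=\frac1m\sum_{i=1}^m l(\theta,z_i)$. Then $$L^{\text{n-mix}}_m(\theta)=L_m(\theta)+\mathcal{R}_1(\theta)+\mathcal{R}_2(\theta)+\mathcal{R}_3(\theta)+\mathbb{E}_{\pmb\lambda\sim\tilde{\mathcal{D}}_\Lambda}\big[o(\|(\lambda_2,\dots,\lambda_n)\|^2)\big],$$ where, with all expectations over $r_x$ taken with $r_x\sim\mathcal{D}_X$ and over $\pmb\lambda$ with $\pmb\lambda\sim\tilde{\mathcal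 D}_\Lambda$, $$\mathcal{R}_1(\theta)=\frac{\mathbb{E}[1-\lambda_1]}{m}\sum_{i=1}^m\big(h'(f_\theta(x_i))-y_i\big)\nabla f_\theta(x_i)^\intercal\,\mathbb{E}[r_x-x_i],$$ $$\mathcal{R}_2(\theta)=\frac{\mathbb{E}[\sum_{j=2}^n\lambda_j^2]}{2m}\sum_{i=1}^m h''(f_\theta(x_i))\,\nabla f_\theta(x_i)^\intercal\,\mathbb{E}[(r_x-x_i)(r_x-x_i)^\intercal]\,\nabla f_\theta(x_i)+\frac{\mathbb{E}[(1-\lambda_1)^2-\sum_{j=2}^n\lambda_j^2]}{2m}\sum_{i=1}^m h''(f_\theta(x_i))\,\nabla f_\theta(x_i)^\intercal\,\mathbb{E}[r_x-x_i]\,\mathbb{E}[r_x-x_i]^\intercal\,\nabla f_\theta(x_i),$$ $$\mathcal{R}_3(\theta)=\frac{\mathbb{E}[\sum_{j=2}^n\lambda_j^2]}{2m}\sum_{i=1}^m\big(h'(f_\theta(x_i))-y_i\big)\,\mathbb{E}\big[(r_x-x_i)^\intercal\nabla^2f_\theta(x_i)(r_x-x_i)\big]+\frac{\mathbb{E}[(1-\lambda_1)^2-\sum_{j=2}^n\lambda_j^2]}{2m}\sum_{i=1}^m\big(h'(f_\theta(x_i))-y_i\big)\,\mathbb{E}[r_x-x_i]^\intercal\,\nabla^2f_\theta(x_i)\,\mathbb{E}[r_x-x_i].$$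
   Context: $\mathrm{Dir}(\pmb\alpha)$ is the Dirichlet distribution on the simplex $\{\pmb\lambda\in[0,1]^n:\sum_k\lambda_k=1\}$. $\nabla f_\theta$, $\nabla^2 f_\theta$ are the gradient and Hessian of $f_\theta$ with respect to its input. $o(\|(\lambda_2,\dots,\lambda_n)\|^2)$ denotes a Taylor remainder term which, divided by $\|(\lambda_2,\dots,\lambda_n)\|^2$, tends to $0$ as $(\lambda_2,\dots,\lambda_n)\to 0$. *)

theory Defs
  imports "HOL-Analysis.Analysis"
begin

text \<open>Conventions: vectors in R^n indexed 0..n-1 (paper index k corresponds to k-1 here),
  encoded as functions nat => real; the Dirichlet distribution Dir(alpha) is the law of
  (1 - sum_{k=1}^{n-1} mu_k, mu_1, ..., mu_{n-1}) where (mu_1..mu_{n-1}) has the usual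
  Dirichlet density w.r.t. Lebesgue measure on the open standard simplex.\<close>

definition dirichlet_density :: "nat \<Rightarrow> (nat \<Rightarrow> real) \<Rightarrow> (nat \<Rightarrow> real) \<Rightarrow> real" where
  "dirichlet_density n alpha lam =
     Gamma (\<Sum>k<n. alpha k) / (\<Prod>k<n. Gamma (alpha k)) * (\<Prod>k<n. lam k powr (alpha k - 1))"

definition dir_complete :: "nat \<Rightarrow> (nat \<Rightarrow> real) \<Rightarrow> (nat \<Rightarrow> real)" where
  "dir_complete n mu = restrict (\<lambda>k. if k = 0 then 1 - (\<Sum>j\<in>{1..<n}. mu j) else mu k) {..<n}"

definition dirichlet :: "nat \<Rightarrow> (nat \<Rightarrow> real) \<Rightarrow> (nat \<Rightarrow> real) measure" where
  "dirichlet n alpha =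
     distr
       (density (PiM {1..<n} (\<lambda>_. lborel))
          (\<lambda>mu. ennreal (indicator {mu. (\<forall>k\<in>{1..<n}. 0 < mu k) \<and> (\<Sum>k\<in>{1..<n}. mu k) < 1} mu
                           * dirichlet_density n alpha (dir_complete n mu))))
       (PiM {..<n} (\<lambda>_. lborel)) (dir_complete n)"

definition dir_shift :: "nat \<Rightarrow> (nat \<Rightarrow> real) \<Rightarrow> nat \<Rightarrow> (nat \<Rightarrow> real)" where
  "dir_shift n alpha l = (\<lambda>k. alpha ((l + k) mod n) + (if k = 0 then 1 else 0))"

definition tilde_expect :: "nat \<Rightarrow> (nat \<Rightarrow> real) \<Rightarrow> ((nat \<Rightarrow> real) \<Rightarrow> real) \<Rightarrow> real" where
  "tilde_expect n alpha g =
     (\<Sum>l<n. alpha l / (\<Sum>i<n. alpha i) * integral\<^sup>L (dirichlet n (dir_shift n alpha l)) g)"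

definition loss :: "(real \<Rightarrow> real) \<Rightarrow> ('t \<Rightarrow> real^'p \<Rightarrow> real) \<Rightarrow> 't \<Rightarrow> (real^'p) \<times> real \<Rightarrow> real" where
  "loss h f theta z = h (f theta (fst z)) - snd z * f theta (fst z)"

definition nmix_loss ::
  "nat \<Rightarrow> (nat \<Rightarrow> real) \<Rightarrow> nat \<Rightarrow> (real \<Rightarrow> real) \<Rightarrow> ('t \<Rightarrow> real^'p \<Rightarrow> real) \<Rightarrow> 't
     \<Rightarrow> (nat \<Rightarrow> real^'p) \<Rightarrow> (nat \<Rightarrow> real) \<Rightarrow> real" where
  "nmix_loss n alpha m h f theta x y =
     1 / real m ^ n * (\<Sum>i\<in>PiE {..<n} (\<lambda>_. {..<m}).
        integral\<^sup>L (dirichlet n alpha)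
          (\<lambda>lam. loss h f theta ((\<Sum>k<n. lam k *\<^sub>R x (i k)), (\<Sum>k<n. lam k * y (i k)))))"

definition std_loss ::
  "nat \<Rightarrow> (real \<Rightarrow> real) \<Rightarrow> ('t \<Rightarrow> real^'p \<Rightarrow> real) \<Rightarrow> 't \<Rightarrow> (nat \<Rightarrow> real^'p) \<Rightarrow> (nat \<Rightarrow> real) \<Rightarrow> real" where
  "std_loss m h f theta x y = 1 / real m * (\<Sum>i<m. loss h f theta (x i, y i))"

definition outer :: "real^'p \<Rightarrow> real^'p \<Rightarrow> real^'p^'p" where
  "outer u v = (\<chi> a b. u $ a * v $ b)"

definition emp_mean_diff :: "nat \<Rightarrow> (nat \<Rightarrow> real^'p) \<Rightarrow> nat \<Rightarrow> real^'p" where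
  "emp_mean_diff m x i = (1 / real m) *\<^sub>R (\<Sum>j<m. x j - x i)"

text \<open>The remainder term: for fixed lam, the average over the anchor index i and the
  other indices j_1..j_{n-1} of the second-order Taylor remainder, in (lam_1,...,lam_{n-1})
  around 0, of lam \<mapsto> l(theta, (x_i + sum_{k>=1} lam_k (x_{j_k} - x_i), y_i)).\<close>
definition mix_remainder ::
  "nat \<Rightarrow> nat \<Rightarrow> (real \<Rightarrow> real) \<Rightarrow> (real \<Rightarrow> real) \<Rightarrow> (real \<Rightarrow> real) \<Rightarrow> ('t \<Rightarrow> real^'p \<Rightarrow> real)
     \<Rightarrow> (real^'p \<Rightarrow> real^'p) \<Rightarrow> (real^'p \<Rightarrow> real^'p^'p) \<Rightarrow> 't
     \<Rightarrow> (nat \<Rightarrow> real^'p) \<Rightarrow> (nat \<Rightarrow> real) \<Rightarrow> (nat \<Rightarrow> real) \<Rightarrow> real" where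
  "mix_remainder n m h h' h'' f gradf hessf theta x y lam =
     1 / real m * (\<Sum>i<m. 1 / real m ^ (n - 1) * (\<Sum>j\<in>PiE {1..<n} (\<lambda>_. {..<m}).
        (let d = (\<Sum>k\<in>{1..<n}. lam k *\<^sub>R (x (j k) - x i)) in
          loss h f theta (x i + d, y i)
          - (loss h f theta (x i, y i)
             + (h' (f theta (x i)) - y i) * (gradf (x i) \<bullet> d)
             + 1 / 2 * (h'' (f theta (x i)) * (gradf (x i) \<bullet> d) ^ 2
                        + (h' (f theta (x i)) - y i) * (d \<bullet> (hessf (x i) *v d)))))))"

end

theory Submission
  imports Defs "HOL-Analysis.Analysis"
begin

abbreviation PP :: "nat \<Rightarrow> (nat \<Rightarrow> real) measure" where
  "PP n \<equiv> PiM {1..<n} (\<lambda>_. lborel)"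
abbreviation QQ :: "nat \<Rightarrow> (nat \<Rightarrow> real) measure" where
  "QQ n \<equiv> PiM {..<n} (\<lambda>_. lborel)"

definition SS :: "nat \<Rightarrow> (nat \<Rightarrow> real) set" where
  "SS n = {mu. (\<forall>k\<in>{1..<n}. 0 < mu k) \<and> (\<Sum>k\<in>{1..<n}. mu k) < 1}"

definition FF :: "nat \<Rightarrow> (nat \<Rightarrow> real) \<Rightarrow> (nat \<Rightarrow> real) \<Rightarrow> real" where
  "FF n b mu = indicator (SS n) mu * dirichlet_density n b (dir_complete n mu)"

lemma comp_meas: "k \<in> I \<Longrightarrow> (\<lambda>x. x k) \<in> borel_measurable (PiM I (\<lambda>_. lborel))"
  using measurable_component_singleton[of k I "\<lambda>_. lborel"] by simp

lemma SS_pred[measurable]: "Measurable.pred (PP n) (\<lambda>mu. mu \<in> SS n)"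
  unfolding SS_def
  by (auto intro!: pred_intros_finite borel_measurable_sum comp_meas pred_less_const pred_const_less)

lemma dir_complete_comp: "k < n \<Longrightarrow> (\<lambda>mu. dir_complete n mu k) \<in> borel_measurable (PP n)"
  unfolding dir_complete_def
  by (cases "k = 0") (auto intro!: borel_measurable_diff borel_measurable_sum comp_meas)

lemma dir_complete_meas[measurable]: "dir_complete n \<in> measurable (PP n) (QQ n)"
  apply (rule measurable_PiM_single')
  subgoal for i using dir_complete_comp[of i n] by (simp add: dir_complete_def)
  by (auto simp: dir_complete_def split: if_splits)

lemma FF_meas[measurable]: "FF n b \<in> borel_measurable (PP n)"
proof -
  have 1: "(\<lambda>mu. \<Prod>k<n. dir_complete n mu k powr (b k - 1)) \<in> borel_measurable (PP n)"
    by (intro borel_measurable_prod powr_real_measurable dir_complete_comp) auto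
  have 2: "(\<lambda>mu. indicator (SS n) mu :: real) \<in> borel_measurable (PP n)"
    by measurable
  show ?thesis unfolding FF_def dirichlet_density_def
    using 1 2 by measurable
qed

lemma dirichlet_alt: "dirichlet n b = distr (density (PP n) (\<lambda>mu. ennreal (FF n b mu))) (QQ n) (dir_complete n)"
  unfolding dirichlet_def FF_def SS_def by simp

lemma beta01:
  assumes a: "a > 0" and b: "b > (0::real)"
  shows "(\<integral>\<^sup>+ t. ennreal (indicator {0<..<1} t * (t powr (a-1) * (1-t) powr (b-1))) \<partial>lborel) = ennreal (Beta a b)"
proof -
  have "(\<integral>\<^sup>+ t. ennreal (t powr (a-1) * (1-t) powr (b-1)) * indicator {0..1} t \<partial>lborel) = ennreal (Beta a b)"
    by (rule nn_integral_has_integral_lebesgue'[OF _ has_integral_Beta_real[OF a b]]) auto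
  moreover have "(\<integral>\<^sup>+ t. ennreal (indicator {0<..<1} t * (t powr (a-1) * (1-t) powr (b-1))) \<partial>lborel)
     = (\<integral>\<^sup>+ t. ennreal (t powr (a-1) * (1-t) powr (b-1)) * indicator {0..1} t \<partial>lborel)"
    by (intro nn_integral_cong) (auto simp: indicator_def)
  ultimately show ?thesis by simp
qed

lemma beta_r:
  assumes a: "a > 0" and b: "b > (0::real)" and r: "r > 0"
  shows "(\<integral>\<^sup>+ t. ennreal (indicator {0<..<r} t * (t powr (a-1) * (r-t) powr (b-1))) \<partial>lborel)
        = ennreal (r powr (a+b-1) * Beta a b)"
proof -
  let ?g = "\<lambda>t. ennreal (indicator {0<..<r} t * (t powr (a-1) * (r-t) powr (b-1)))"
  have "(\<integral>\<^sup>+ t. ?g t \<partial>lborel) = ennreal \<bar>r\<bar> * (\<integral>\<^sup>+ x. ?g (0 + r * x) \<partial>lborel)"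
    apply (rule nn_integral_real_affine) using r by auto
  also have "(\<integral>\<^sup>+ x. ?g (0 + r * x) \<partial>lborel) = (\<integral>\<^sup>+ x. ennreal (r powr (a+b-2)) *
        ennreal (indicator {0<..<1} x * (x powr (a-1) * (1-x) powr (b-1))) \<partial>lborel)"
  proof (intro nn_integral_cong)
    fix x :: real
    show "?g (0 + r * x) = ennreal (r powr (a+b-2)) *
        ennreal (indicator {0<..<1} x * (x powr (a-1) * (1-x) powr (b-1)))"
    proof (cases "0 < x \<and> x < 1")
      case True
      have "r * x \<in> {0<..<r}" using True r by auto
      moreover have "(r * x) powr (a-1) = r powr (a-1) * x powr (a-1)"
        using True r by (simp add: powr_mult)
      moreover have "(r - r * x) powr (b-1) = r powr (b-1) * (1-x) powr (b-1)"
        using True r by (subst powr_mult[symmetric]) (auto simp: algebra_simps)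
      moreover have "r powr (a+b-2) = r powr (a-1) * r powr (b-1)"
        using r by (simp add: powr_add[symmetric])
      ultimately show ?thesis using True r
        by (simp add: ennreal_mult[symmetric] indicator_def)
    next
      case False
      then have "r * x \<notin> {0<..<r}" using r
        by (auto simp: mult_less_cancel_left2 zero_less_mult_iff)
      then have "indicator {0<..<r} (r * x) = (0::real)" by simp
      moreover have "indicator {0<..<1} x = (0::real)" using False by simp
      ultimately show ?thesis by simp
    qed
  qed
  also have "\<dots> = ennreal (r powr (a+b-2)) * ennreal (Beta a b)"
    by (subst nn_integral_cmult) (auto simp: beta01[OF a b])
  finally have "(\<integral>\<^sup>+ t. ?g t \<partial>lborel) = ennreal (r * r powr (a+b-2)) * ennreal (Beta a b)"
    using r by (simp add: ennreal_mult mult.assoc)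
  moreover have "r * r powr (a+b-2) = r powr (a+b-1)"
    using r by (simp add: powr_mult_base)
  moreover have "Beta a b > 0" using a b by (simp add: Beta_def)
  ultimately show ?thesis using r by (simp add: ennreal_mult)
qed

lemma psf_lborel: "product_sigma_finite (\<lambda>_::nat. lborel :: real measure)"
  by unfold_locales

definition dset :: "nat set \<Rightarrow> real \<Rightarrow> (nat \<Rightarrow> real) set" where
  "dset I s = {mu. (\<forall>k\<in>I. 0 < mu k) \<and> (\<Sum>k\<in>I. mu k) < s}"

definition dfun :: "nat set \<Rightarrow> (nat \<Rightarrow> real) \<Rightarrow> real \<Rightarrow> real \<Rightarrow> (nat \<Rightarrow> real) \<Rightarrow> real" where
  "dfun I b b0 s mu = indicator (dset I s) mu * ((\<Prod>k\<in>I. mu k powr (b k - 1)) * (s - (\<Sum>k\<in>I. mu k)) powr (b0 - 1))"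

lemma dfun_meas[measurable]: "finite I \<Longrightarrow> dfun I b b0 s \<in> borel_measurable (PiM I (\<lambda>_. lborel))"
proof -
  assume fin: "finite I"
  have p: "Measurable.pred (PiM I (\<lambda>_. lborel)) (\<lambda>mu. mu \<in> dset I s)"
    unfolding dset_def using fin
    by (auto intro!: pred_intros_finite borel_measurable_sum comp_meas pred_less_const pred_const_less)
  have 1: "(\<lambda>mu. indicator (dset I s) mu :: real) \<in> borel_measurable (PiM I (\<lambda>_. lborel))"
    using p by measurable
  have 2: "(\<lambda>mu. \<Prod>k\<in>I. mu k powr (b k - 1)) \<in> borel_measurable (PiM I (\<lambda>_. lborel))"
    by (intro borel_measurable_prod powr_real_measurable comp_meas) auto
  have 3: "(\<lambda>mu. (s - (\<Sum>k\<in>I. mu k)) powr (b0 - 1)) \<in> borel_measurable (PiM I (\<lambda>_. lborel))"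
    by (intro borel_measurable_sum powr_real_measurable comp_meas borel_measurable_diff) auto
  show ?thesis unfolding dfun_def using 1 2 3 by measurable
qed

lemma dfun_nonneg: "dfun I b b0 s mu \<ge> 0"
  unfolding dfun_def by (auto simp: indicator_def intro!: mult_nonneg_nonneg prod_nonneg)

lemma dir_norm_gen:
  assumes "finite I" "\<forall>k\<in>I. b k > 0" "b0 > 0" "s > 0"
  shows "(\<integral>\<^sup>+ mu. ennreal (dfun I b b0 s mu) \<partial>PiM I (\<lambda>_. lborel))
       = ennreal (s powr (sum b I + b0 - 1) * (\<Prod>k\<in>I. Gamma (b k)) * Gamma b0 / Gamma (sum b I + b0))"
  using assms
proof (induction I arbitrary: b0 s rule: finite_induct)
  case empty
  interpret product_sigma_finite "\<lambda>_::nat. lborel :: real measure" by (rule psf_lborel)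
  have g: "Gamma b0 > 0" using empty by auto
  have e: "s powr (sum b {} + b0 - 1) * (\<Prod>k\<in>{}. Gamma (b k)) * Gamma b0 / Gamma (sum b {} + b0) = s powr (b0-1)"
    using g by simp
  show ?case unfolding e
    by (subst nn_integral_empty) (use empty g in \<open>auto simp: dfun_def dset_def\<close>)
next
  case (insert a I)
  interpret product_sigma_finite "\<lambda>_::nat. lborel :: real measure" by (rule psf_lborel)
  have ba: "b a > 0" using insert by auto
  let ?B = "Beta (b a) b0"
  have Bpos: "?B > 0" using ba insert by (simp add: Beta_def)
  have "(\<integral>\<^sup>+ mu. ennreal (dfun (insert a I) b b0 s mu) \<partial>PiM (insert a I) (\<lambda>_. lborel))
     = (\<integral>\<^sup>+ x. (\<integral>\<^sup>+ y. ennreal (dfun (insert a I) b b0 s (x(a := y))) \<partial>lborel) \<partial>PiM I (\<lambda>_. lborel))"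
    by (rule product_nn_integral_insert) (use insert in auto)
  also have "\<dots> = (\<integral>\<^sup>+ x. ennreal (dfun I b (b a + b0) s x) * ennreal ?B \<partial>PiM I (\<lambda>_. lborel))"
  proof (intro nn_integral_cong)
    fix x :: "nat \<Rightarrow> real"
    let ?r = "s - (\<Sum>k\<in>I. x k)"
    let ?c = "indicator {x. \<forall>k\<in>I. 0 < x k} x * (\<Prod>k\<in>I. x k powr (b k - 1)) :: real"
    have c0: "?c \<ge> 0" by (auto intro!: mult_nonneg_nonneg prod_nonneg)
    have pt: "dfun (insert a I) b b0 s (x(a := y)) =
        ?c * (indicator {0<..<?r} y * (y powr (b a - 1) * (?r - y) powr (b0 - 1)))" for y
    proof -
      have sI: "(\<Sum>k\<in>I. (x(a:=y)) k) = (\<Sum>k\<in>I. x k)"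
        by (rule sum.cong) (use insert(2) in auto)
      have s1: "(\<Sum>k\<in>insert a I. (x(a:=y)) k) = y + (\<Sum>k\<in>I. x k)"
        using insert(1,2) sI by simp
      have pI: "(\<Prod>k\<in>I. (x(a:=y)) k powr (b k - 1)) = (\<Prod>k\<in>I. x k powr (b k - 1))"
        by (rule prod.cong) (use insert(2) in auto)
      have p1: "(\<Prod>k\<in>insert a I. (x(a:=y)) k powr (b k - 1)) = y powr (b a - 1) * (\<Prod>k\<in>I. x k powr (b k - 1))"
        using insert(1,2) pI by simp
      have i1: "(x(a:=y) \<in> dset (insert a I) s) \<longleftrightarrow> (\<forall>k\<in>I. 0 < x k) \<and> y \<in> {0<..<?r}"
        using insert s1 by (auto simp: dset_def)
      show ?thesis unfolding dfun_def s1 p1 using i1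
        by (auto simp: indicator_def algebra_simps)
    qed
    have "(\<integral>\<^sup>+ y. ennreal (dfun (insert a I) b b0 s (x(a := y))) \<partial>lborel)
        = (\<integral>\<^sup>+ y. ennreal ?c * ennreal (indicator {0<..<?r} y * (y powr (b a - 1) * (?r - y) powr (b0 - 1))) \<partial>lborel)"
      unfolding pt using c0 by (intro nn_integral_cong) (auto simp: ennreal_mult)
    also have "\<dots> = ennreal ?c * (\<integral>\<^sup>+ y. ennreal (indicator {0<..<?r} y * (y powr (b a - 1) * (?r - y) powr (b0 - 1))) \<partial>lborel)"
      by (rule nn_integral_cmult) measurable
    also have "\<dots> = ennreal (dfun I b (b a + b0) s x) * ennreal ?B"
    proof (cases "?r > 0")
      case True
      show ?thesis
        unfolding beta_r[OF ba insert(5) True] using True Bpos c0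
        by (auto simp: dfun_def dset_def indicator_def ennreal_mult[symmetric] algebra_simps)
    next
      case False
      then have "indicator {0<..<?r} y = (0::real)" for y by auto
      then show ?thesis using False by (auto simp: dfun_def dset_def)
    qed
    finally show "(\<integral>\<^sup>+ y. ennreal (dfun (insert a I) b b0 s (x(a := y))) \<partial>lborel)
        = ennreal (dfun I b (b a + b0) s x) * ennreal ?B" .
  qed
  also have "\<dots> = (\<integral>\<^sup>+ x. ennreal (dfun I b (b a + b0) s x) \<partial>PiM I (\<lambda>_. lborel)) * ennreal ?B"
    by (rule nn_integral_multc) (use insert in measurable)
  also have "\<dots> = ennreal (s powr (sum b I + (b a + b0) - 1) * (\<Prod>k\<in>I. Gamma (b k)) * Gamma (b a + b0) / Gamma (sum b I + (b a + b0))) * ennreal ?B"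
    using insert ba by (subst insert.IH) auto
  also have "\<dots> = ennreal (s powr (sum b (insert a I) + b0 - 1) * (\<Prod>k\<in>insert a I. Gamma (b k)) * Gamma b0 / Gamma (sum b (insert a I) + b0))"
  proof -
    have g: "Gamma (b a + b0) > 0" using ba insert by auto
    have "b0 + b a > 0" using ba insert by auto
    then have "Gamma (b0 + b a) > 0" by (rule Gamma_real_pos)
    then have g': "Gamma (b0 + b a) \<noteq> 0" by simp
    have alg: "s powr (sum b I + (b a + b0) - 1) * (\<Prod>k\<in>I. Gamma (b k)) * Gamma (b a + b0) / Gamma (sum b I + (b a + b0)) * ?B
        = s powr (sum b (insert a I) + b0 - 1) * (\<Prod>k\<in>insert a I. Gamma (b k)) * Gamma b0 / Gamma (sum b (insert a I) + b0)"
      using insert g g' by (simp add: Beta_def algebra_simps)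
    have "sum b I \<ge> 0" using insert by (intro sum_nonneg) (auto simp: less_imp_le)
    then have "sum b I + (b a + b0) > 0" using ba insert by auto
    then have gg: "Gamma (sum b I + (b a + b0)) > 0" by (rule Gamma_real_pos)
    moreover have "s powr (sum b I + (b a + b0) - 1) * (\<Prod>k\<in>I. Gamma (b k)) * Gamma (b a + b0) / Gamma (sum b I + (b a + b0)) \<ge> 0"
      using insert g gg by (intro divide_nonneg_nonneg mult_nonneg_nonneg prod_nonneg) (auto intro: less_imp_le)
    ultimately show ?thesis using Bpos alg by (simp add: ennreal_mult[symmetric] del: times_divide_eq_left)
  qed
  finally show ?case .
qed

definition pos_on :: "nat \<Rightarrow> (nat \<Rightarrow> real) \<Rightarrow> bool" where
  "pos_on n b \<longleftrightarrow> (\<forall>k<n. b k > 0)"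

definition Delta :: "nat \<Rightarrow> (nat \<Rightarrow> real) set" where
  "Delta n = {lam. (\<forall>k<n. 0 \<le> lam k) \<and> (\<Sum>k<n. lam k) = 1}"

lemma lessThan_eq_insert0: "(n::nat) \<ge> 1 \<Longrightarrow> {..<n} = insert 0 {1..<n}"
  by auto

lemma FF_meas'[measurable]: "FF n b \<in> borel_measurable (PiM {Suc 0..<n} (\<lambda>_. lborel))"
  using FF_meas[of n b] by simp

lemma dir_complete_meas'[measurable]: "dir_complete n \<in> measurable (PiM {Suc 0..<n} (\<lambda>_. lborel)) (QQ n)"
  using dir_complete_meas[of n] by simp

lemma dc_sum: "n \<ge> 1 \<Longrightarrow> (\<Sum>k<n. dir_complete n mu k) = 1"
proof -
  assume n: "n \<ge> 1"
  have "(\<Sum>k<n. dir_complete n mu k) = dir_complete n mu 0 + (\<Sum>k\<in>{1..<n}. dir_complete n mu k)"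
    unfolding lessThan_eq_insert0[OF n] by simp
  also have "(\<Sum>k\<in>{1..<n}. dir_complete n mu k) = (\<Sum>k\<in>{1..<n}. mu k)"
    by (rule sum.cong) (auto simp: dir_complete_def)
  finally show ?thesis using n by (simp add: dir_complete_def)
qed

lemma dc_pos: "n \<ge> 1 \<Longrightarrow> mu \<in> SS n \<Longrightarrow> k < n \<Longrightarrow> dir_complete n mu k > 0"
  by (auto simp: dir_complete_def SS_def)

lemma dc_Delta: "n \<ge> 1 \<Longrightarrow> mu \<in> SS n \<Longrightarrow> dir_complete n mu \<in> Delta n"
  using dc_pos[of n mu] dc_sum[of n mu] by (auto simp: Delta_def less_imp_le)

lemma gamma_prod_pos: "pos_on n b \<Longrightarrow> (\<Prod>k<n. Gamma (b k)) > 0"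
  by (auto simp: pos_on_def intro!: prod_pos)

lemma gamma_sum_pos: "n \<ge> 1 \<Longrightarrow> pos_on n b \<Longrightarrow> Gamma (\<Sum>k<n. b k) > 0"
proof -
  assume n: "n \<ge> 1" and p: "pos_on n b"
  have ne: "{..<n} \<noteq> {}"
  proof
    assume "{..<n} = {}"
    then have "0 \<notin> {..<n}" by simp
    with n show False by simp
  qed
  have "(\<Sum>k<n. b k) > 0" using p ne unfolding pos_on_def
    by (intro sum_pos) auto
  then show ?thesis by (rule Gamma_real_pos)
qed

lemma FF_nonneg: "n \<ge> 1 \<Longrightarrow> pos_on n b \<Longrightarrow> FF n b mu \<ge> 0"
  unfolding FF_def dirichlet_density_def
  using gamma_prod_pos[of n b] gamma_sum_pos[of n b]
  by (auto intro!: mult_nonneg_nonneg divide_nonneg_nonneg prod_nonneg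
      simp: indicator_def pos_on_def less_imp_le)

lemma FF_dfun: "n \<ge> 1 \<Longrightarrow> FF n b mu = Gamma (\<Sum>k<n. b k) / (\<Prod>k<n. Gamma (b k)) * dfun {1..<n} b (b 0) 1 mu"
proof -
  assume n: "n \<ge> 1"
  have p: "(\<Prod>k<n. dir_complete n mu k powr (b k - 1)) =
      (\<Prod>k\<in>{1..<n}. mu k powr (b k - 1)) * (1 - (\<Sum>k\<in>{1..<n}. mu k)) powr (b 0 - 1)"
  proof -
    have "(\<Prod>k<n. dir_complete n mu k powr (b k - 1)) = dir_complete n mu 0 powr (b 0 - 1) *
       (\<Prod>k\<in>{1..<n}. dir_complete n mu k powr (b k - 1))"
      unfolding lessThan_eq_insert0[OF n] by simp
    also have "(\<Prod>k\<in>{1..<n}. dir_complete n mu k powr (b k - 1)) = (\<Prod>k\<in>{1..<n}. mu k powr (b k - 1))"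
      by (rule prod.cong) (auto simp: dir_complete_def)
    finally show ?thesis using n by (simp add: dir_complete_def)
  qed
  show ?thesis unfolding FF_def dirichlet_density_def dfun_def p
    by (simp add: SS_def dset_def)
qed

lemma FF_int1: assumes n: "n \<ge> 1" and p: "pos_on n b"
  shows "(\<integral>\<^sup>+ mu. ennreal (FF n b mu) \<partial>PP n) = 1"
proof -
  let ?C = "Gamma (\<Sum>k<n. b k) / (\<Prod>k<n. Gamma (b k))"
  have C0: "?C \<ge> 0" using gamma_prod_pos[OF p] gamma_sum_pos[OF n p] by simp
  have "(\<integral>\<^sup>+ mu. ennreal (FF n b mu) \<partial>PP n) = (\<integral>\<^sup>+ mu. ennreal ?C * ennreal (dfun {1..<n} b (b 0) 1 mu) \<partial>PP n)"
    unfolding FF_dfun[OF n] by (intro nn_integral_cong ennreal_mult[OF C0 dfun_nonneg])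
  also have "\<dots> = ennreal ?C * (\<integral>\<^sup>+ mu. ennreal (dfun {1..<n} b (b 0) 1 mu) \<partial>PP n)"
    by (rule nn_integral_cmult) measurable
  also have "(\<integral>\<^sup>+ mu. ennreal (dfun {1..<n} b (b 0) 1 mu) \<partial>PP n) =
      ennreal (1 powr (sum b {1..<n} + b 0 - 1) * (\<Prod>k\<in>{1..<n}. Gamma (b k)) * Gamma (b 0) / Gamma (sum b {1..<n} + b 0))"
    using p n by (intro dir_norm_gen) (auto simp: pos_on_def)
  also have "ennreal ?C * \<dots> = ennreal (?C * ((\<Prod>k\<in>{1..<n}. Gamma (b k)) * Gamma (b 0) / Gamma (sum b {1..<n} + b 0)))"
  proof -
    have "sum b {1..<n} \<ge> 0" using p by (intro sum_nonneg) (auto simp: pos_on_def less_imp_le)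
    then have "sum b {1..<n} + b 0 > 0" using p n by (auto simp: pos_on_def)
    then have g1: "Gamma (sum b {1..<n} + b 0) > 0" by (rule Gamma_real_pos)
    have g2: "(\<Prod>k\<in>{1..<n}. Gamma (b k)) \<ge> 0" using p by (intro prod_nonneg) (auto simp: pos_on_def less_imp_le)
    have g3: "Gamma (b 0) > 0" using p n by (auto simp: pos_on_def)
    have X0: "(\<Prod>k\<in>{1..<n}. Gamma (b k)) * Gamma (b 0) / Gamma (sum b {1..<n} + b 0) \<ge> 0"
      using g1 g2 g3 by simp
    have o: "(1::real) powr (sum b {1..<n} + b 0 - 1) = 1" by simp
    show ?thesis unfolding o mult_1 by (rule ennreal_mult[symmetric, OF C0 X0])
  qed
  also have "?C * ((\<Prod>k\<in>{1..<n}. Gamma (b k)) * Gamma (b 0) / Gamma (sum b {1..<n} + b 0)) = 1"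
  proof -
    have s: "(\<Sum>k<n. b k) = sum b {1..<n} + b 0" unfolding lessThan_eq_insert0[OF n] by simp
    have pr: "(\<Prod>k<n. Gamma (b k)) = (\<Prod>k\<in>{1..<n}. Gamma (b k)) * Gamma (b 0)" unfolding lessThan_eq_insert0[OF n] by simp
    have aux: "\<And>x y::real. x > 0 \<Longrightarrow> y > 0 \<Longrightarrow> y / x * (x / y) = 1" by simp
    show ?thesis using gamma_prod_pos[OF p] gamma_sum_pos[OF n p] unfolding s pr by (rule aux)
  qed
  finally show ?thesis by simp
qed

lemma FF_integrable: "n \<ge> 1 \<Longrightarrow> pos_on n b \<Longrightarrow> integrable (PP n) (FF n b)"
  using FF_meas[of n b] FF_int1[of n b] FF_nonneg[of n b]
  by (intro integrableI_nonneg) auto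

lemma FF_integral: "n \<ge> 1 \<Longrightarrow> pos_on n b \<Longrightarrow> integral\<^sup>L (PP n) (FF n b) = 1"
  using FF_int1[of n b] FF_nonneg[of n b]
  by (subst integral_eq_nn_integral) auto

lemma dir_integral:
  fixes g :: "(nat \<Rightarrow> real) \<Rightarrow> real"
  assumes n: "n \<ge> 1" and p: "pos_on n b" and g: "g \<in> borel_measurable (QQ n)"
  shows "integral\<^sup>L (dirichlet n b) g = (\<integral> mu. FF n b mu * g (dir_complete n mu) \<partial>PP n)"
proof -
  have "integral\<^sup>L (dirichlet n b) g = integral\<^sup>L (density (PP n) (\<lambda>mu. ennreal (FF n b mu))) (\<lambda>x. g (dir_complete n x))"
    unfolding dirichlet_alt apply (rule integral_distr) subgoal by measurable by (rule g)
  also have "\<dots> = (\<integral> mu. FF n b mu *\<^sub>R g (dir_complete n mu) \<partial>PP n)"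
    by (rule integral_density) (use g FF_nonneg[OF n p] in auto)
  finally show ?thesis by simp
qed

lemma dir_integrable:
  fixes g :: "(nat \<Rightarrow> real) \<Rightarrow> real"
  assumes n: "n \<ge> 1" and p: "pos_on n b" and g: "g \<in> borel_measurable (QQ n)"
  shows "integrable (dirichlet n b) g \<longleftrightarrow> integrable (PP n) (\<lambda>mu. FF n b mu * g (dir_complete n mu))"
proof -
  have "integrable (dirichlet n b) g \<longleftrightarrow> integrable (density (PP n) (\<lambda>mu. ennreal (FF n b mu))) (\<lambda>x. g (dir_complete n x))"
    unfolding dirichlet_alt apply (rule integrable_distr_eq) subgoal by measurable by (rule g)
  also have "\<dots> \<longleftrightarrow> integrable (PP n) (\<lambda>mu. FF n b mu *\<^sub>R g (dir_complete n mu))"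
    by (rule integrable_density) (use g FF_nonneg[OF n p] in auto)
  finally show ?thesis by simp
qed

lemma dir_integrable_bounded:
  fixes g :: "(nat \<Rightarrow> real) \<Rightarrow> real"
  assumes n: "n \<ge> 1" and p: "pos_on n b" and g: "g \<in> borel_measurable (QQ n)"
    and B: "\<And>lam. lam \<in> Delta n \<Longrightarrow> \<bar>g lam\<bar> \<le> B"
  shows "integrable (dirichlet n b) g"
proof -
  have "integrable (PP n) (\<lambda>mu. FF n b mu * g (dir_complete n mu))"
  proof (rule Bochner_Integration.integrable_bound)
    show "integrable (PP n) (\<lambda>mu. B * FF n b mu)"
      using FF_integrable[OF n p] by simp
    show "(\<lambda>mu. FF n b mu * g (dir_complete n mu)) \<in> borel_measurable (PP n)"
      using g by measurable
    show "AE mu in PP n. norm (FF n b mu * g (dir_complete n mu)) \<le> norm (B * FF n b mu)"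
    proof (rule AE_I2)
      fix mu
      show "norm (FF n b mu * g (dir_complete n mu)) \<le> norm (B * FF n b mu)"
      proof (cases "mu \<in> SS n")
        case True
        have "\<bar>g (dir_complete n mu)\<bar> \<le> B" using B dc_Delta[OF n True] by blast
        then have "\<bar>FF n b mu\<bar> * \<bar>g (dir_complete n mu)\<bar> \<le> \<bar>FF n b mu\<bar> * B"
          by (intro mult_left_mono) auto
        moreover have "\<bar>FF n b mu\<bar> * B \<le> \<bar>FF n b mu\<bar> * \<bar>B\<bar>" by (rule mult_left_mono) auto
        ultimately show ?thesis using FF_nonneg[OF n p, of mu]
          by (simp add: abs_mult mult.commute)
      next
        case False
        then show ?thesis by (simp add: FF_def)
      qed
    qed
  qed
  then show ?thesis using dir_integrable[OF n p g] by simp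
qed

lemma pos_on_upd: "pos_on n b \<Longrightarrow> pos_on n (b(l := b l + 1))"
  by (auto simp: pos_on_def add_pos_pos)

lemma FF_reweight:
  assumes n: "n \<ge> 1" and p: "pos_on n b" and l: "l < n"
  shows "FF n b mu * dir_complete n mu l = b l / (\<Sum>k<n. b k) * FF n (b(l := b l + 1)) mu"
proof (cases "mu \<in> SS n")
  case False
  then show ?thesis by (simp add: FF_def)
next
  case True
  let ?b' = "b(l := b l + 1)"
  let ?lam = "dir_complete n mu"
  let ?A = "{..<n}" and ?R = "{..<n} - {l}"
  have lA: "l \<in> ?A" using l by simp
  have bl: "b l > 0" using p l by (simp add: pos_on_def)
  have laml: "?lam l > 0" using dc_pos[OF n True l] .
  have s1: "sum ?b' ?A = b l + 1 + sum b ?R"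
    using sum.remove[OF _ lA, of ?b'] sum.cong[of ?R ?R ?b' b] by auto
  have s0: "sum b ?A = b l + sum b ?R"
    using sum.remove[OF _ lA, of b] by auto
  have g1: "(\<Prod>k\<in>?A. Gamma (?b' k)) = Gamma (b l + 1) * (\<Prod>k\<in>?R. Gamma (b k))"
    using prod.remove[OF _ lA, of "\<lambda>k. Gamma (?b' k)"] prod.cong[of ?R ?R "\<lambda>k. Gamma (?b' k)" "\<lambda>k. Gamma (b k)"] by auto
  have g0: "(\<Prod>k\<in>?A. Gamma (b k)) = Gamma (b l) * (\<Prod>k\<in>?R. Gamma (b k))"
    using prod.remove[OF _ lA, of "\<lambda>k. Gamma (b k)"] by auto
  have q1: "(\<Prod>k\<in>?A. ?lam k powr (?b' k - 1)) = ?lam l powr (b l) * (\<Prod>k\<in>?R. ?lam k powr (b k - 1))"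
    using prod.remove[OF _ lA, of "\<lambda>k. ?lam k powr (?b' k - 1)"]
      prod.cong[of ?R ?R "\<lambda>k. ?lam k powr (?b' k - 1)" "\<lambda>k. ?lam k powr (b k - 1)"] by auto
  have q0: "(\<Prod>k\<in>?A. ?lam k powr (b k - 1)) = ?lam l powr (b l - 1) * (\<Prod>k\<in>?R. ?lam k powr (b k - 1))"
    using prod.remove[OF _ lA, of "\<lambda>k. ?lam k powr (b k - 1)"] by auto
  have pw: "?lam l powr (b l) = ?lam l powr (b l - 1) * ?lam l"
  proof -
    have "?lam l powr (b l) = ?lam l powr ((b l - 1) + 1)" by simp
    also have "\<dots> = ?lam l powr (b l - 1) * ?lam l powr 1" by (rule powr_add)
    also have "\<dots> = ?lam l powr (b l - 1) * ?lam l" using laml by simp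
    finally show ?thesis .
  qed
  have S: "sum b ?A > 0" using gamma_sum_pos[OF n p] 
    using n p by (intro sum_pos) (auto simp: pos_on_def)
  have GS: "Gamma (sum b ?A + 1) = sum b ?A * Gamma (sum b ?A)"
    using S by (intro Gamma_plus1) (auto dest: nonpos_Ints_nonpos)
  have Gl: "Gamma (b l + 1) = b l * Gamma (b l)"
    using bl by (intro Gamma_plus1) (auto dest: nonpos_Ints_nonpos)
  have GR: "(\<Prod>k\<in>?R. Gamma (b k)) > 0" using p by (intro prod_pos) (auto simp: pos_on_def)
  have Glp: "Gamma (b l) > 0" using bl by simp
  have sA: "sum ?b' ?A = sum b ?A + 1" using s1 s0 by simp
  show ?thesis
    unfolding FF_def dirichlet_density_def using True
    apply (simp only: indicator_simps mult_1 sA g1 g0 q1 q0 pw GS Gl)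
    using S bl GR Glp by (simp add: field_simps)
qed

lemma dir_reweight_int:
  fixes g :: "(nat \<Rightarrow> real) \<Rightarrow> real"
  assumes n: "n \<ge> 1" and p: "pos_on n b" and l: "l < n" and g: "g \<in> borel_measurable (QQ n)"
  shows "integral\<^sup>L (dirichlet n b) (\<lambda>lam. lam l * g lam)
       = b l / (\<Sum>k<n. b k) * integral\<^sup>L (dirichlet n (b(l := b l + 1))) g"
proof -
  have gl: "(\<lambda>lam. lam l * g lam) \<in> borel_measurable (QQ n)"
  proof -
    have c: "(\<lambda>lam. lam l) \<in> borel_measurable (QQ n)" using l by (intro comp_meas) simp
    show ?thesis by (intro borel_measurable_times c g)
  qed
  have "integral\<^sup>L (dirichlet n b) (\<lambda>lam. lam l * g lam) = (\<integral> mu. FF n b mu * (dir_complete n mu l * g (dir_complete n mu)) \<partial>PP n)"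
    by (rule dir_integral[OF n p gl])
  also have "\<dots> = (\<integral> mu. b l / (\<Sum>k<n. b k) * (FF n (b(l := b l + 1)) mu * g (dir_complete n mu)) \<partial>PP n)"
    by (intro Bochner_Integration.integral_cong refl) (simp add: mult.assoc[symmetric] FF_reweight[OF n p l])
  also have "\<dots> = b l / (\<Sum>k<n. b k) * (\<integral> mu. FF n (b(l := b l + 1)) mu * g (dir_complete n mu) \<partial>PP n)"
    by (rule integral_mult_right_zero)
  also have "(\<integral> mu. FF n (b(l := b l + 1)) mu * g (dir_complete n mu) \<partial>PP n) = integral\<^sup>L (dirichlet n (b(l := b l + 1))) g"
    by (rule dir_integral[OF n pos_on_upd[OF p] g, symmetric])
  finally show ?thesis .
qed

lemma restrict_comp_meas:
  fixes I :: "nat set"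
  assumes I: "finite I" and pm: "pm \<in> I \<rightarrow> I"
  shows "(\<lambda>mu. restrict (mu \<circ> pm) I) \<in> measurable (PiM I (\<lambda>_. lborel :: real measure)) (PiM I (\<lambda>_. lborel))"
  apply (rule measurable_PiM_single')
  subgoal for i using pm by (auto intro!: comp_meas)
  by (auto simp: space_PiM)

lemma PiM_perm:
  fixes I :: "nat set"
  assumes I: "finite I" and pm: "bij_betw pm I I"
  shows "distr (PiM I (\<lambda>_. lborel :: real measure)) (PiM I (\<lambda>_. lborel)) (\<lambda>mu. restrict (mu \<circ> pm) I)
        = PiM I (\<lambda>_. lborel)"
proof -
  interpret product_sigma_finite "\<lambda>_::nat. lborel :: real measure" by (rule psf_lborel)
  have pmm: "pm \<in> I \<rightarrow> I" using pm by (auto simp: bij_betw_def)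
  let ?pm' = "inv_into I pm"
  have pm': "bij_betw ?pm' I I" using pm by (rule bij_betw_inv_into)
  have m: "(\<lambda>mu. restrict (mu \<circ> pm) I) \<in> measurable (PiM I (\<lambda>_. lborel :: real measure)) (PiM I (\<lambda>_. lborel))"
    by (rule restrict_comp_meas[OF I pmm])
  show ?thesis
  proof (rule PiM_eqI[OF I])
    show "sets (distr (PiM I (\<lambda>_. lborel)) (PiM I (\<lambda>_. lborel)) (\<lambda>mu. restrict (mu \<circ> pm) I)) = sets (PiM I (\<lambda>_. lborel))"
      by simp
    fix A :: "nat \<Rightarrow> real set" assume A: "\<And>i. i \<in> I \<Longrightarrow> A i \<in> sets lborel"
    have pre: "(\<lambda>mu. restrict (mu \<circ> pm) I) -` PiE I A \<inter> space (PiM I (\<lambda>_. lborel)) = PiE I (\<lambda>j. A (?pm' j))"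
    proof (intro set_eqI iffI)
      fix mu assume "mu \<in> (\<lambda>mu. restrict (mu \<circ> pm) I) -` PiE I A \<inter> space (PiM I (\<lambda>_. lborel))"
      then have a: "\<forall>i\<in>I. mu (pm i) \<in> A i" and e: "mu \<in> extensional I"
        by (auto simp: space_PiM PiE_def Pi_iff)
      show "mu \<in> PiE I (\<lambda>j. A (?pm' j))"
      proof (rule PiE_I)
        fix j assume j: "j \<in> I"
        have "?pm' j \<in> I" using pm' j by (auto simp: bij_betw_def)
        moreover have "pm (?pm' j) = j" using pm j by (simp add: bij_betw_inv_into_right)
        ultimately show "mu j \<in> A (?pm' j)" using a by metis
      next
        fix j assume "j \<notin> I" then show "mu j = undefined" using e by (auto simp: extensional_def)
      qed
    next
      fix mu assume mu: "mu \<in> PiE I (\<lambda>j. A (?pm' j))"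
      have "\<forall>i\<in>I. mu (pm i) \<in> A i"
      proof
        fix i assume i: "i \<in> I"
        have "pm i \<in> I" using i pmm by auto
        then have "mu (pm i) \<in> A (?pm' (pm i))" using mu by auto
        moreover have "?pm' (pm i) = i" using pm i by (simp add: bij_betw_inv_into_left)
        ultimately show "mu (pm i) \<in> A i" by simp
      qed
      then show "mu \<in> (\<lambda>mu. restrict (mu \<circ> pm) I) -` PiE I A \<inter> space (PiM I (\<lambda>_. lborel))"
        using mu by (auto simp: space_PiM PiE_def)
    qed
    have "emeasure (distr (PiM I (\<lambda>_. lborel)) (PiM I (\<lambda>_. lborel)) (\<lambda>mu. restrict (mu \<circ> pm) I)) (PiE I A)
        = emeasure (PiM I (\<lambda>_. lborel)) (PiE I (\<lambda>j. A (?pm' j)))"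
    proof -
      have PA: "PiE I A \<in> sets (PiM I (\<lambda>_. lborel))" using A by (auto intro!: sets_PiM_I_finite I)
      have "emeasure (distr (PiM I (\<lambda>_. lborel)) (PiM I (\<lambda>_. lborel)) (\<lambda>mu. restrict (mu \<circ> pm) I)) (PiE I A)
        = emeasure (PiM I (\<lambda>_. lborel)) ((\<lambda>mu. restrict (mu \<circ> pm) I) -` PiE I A \<inter> space (PiM I (\<lambda>_. lborel)))"
        using emeasure_distr[OF m PA] by simp
      then show ?thesis unfolding pre .
    qed
    also have "\<dots> = (\<Prod>j\<in>I. emeasure lborel (A (?pm' j)))"
      using A pm' I by (subst emeasure_PiM) (auto simp: bij_betw_def)
    also have "\<dots> = (\<Prod>i\<in>I. emeasure lborel (A i))"
      by (rule prod.reindex_bij_betw[OF pm', of "\<lambda>i. emeasure lborel (A i)"])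
    finally show "emeasure (distr (PiM I (\<lambda>_. lborel)) (PiM I (\<lambda>_. lborel)) (\<lambda>mu. restrict (mu \<circ> pm) I)) (PiE I A)
        = (\<Prod>i\<in>I. emeasure lborel (A i))" .
  qed
qed

definition Rl :: "nat \<Rightarrow> nat \<Rightarrow> (nat \<Rightarrow> real) \<Rightarrow> (nat \<Rightarrow> real)" where
  "Rl n l mu = mu(l := 1 - (\<Sum>k\<in>{1..<n}. mu k))"

lemma Rl_meas: "l \<in> {1..<n} \<Longrightarrow> Rl n l \<in> measurable (PP n) (PP n)"
  unfolding Rl_def
  apply (rule measurable_PiM_single')
  subgoal for i by (cases "i = l") (auto intro!: comp_meas borel_measurable_diff borel_measurable_sum)
  by (auto simp: space_PiM PiE_def extensional_def)

lemma Rl_nn: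
  assumes l: "l \<in> {1..<n}" and f: "f \<in> borel_measurable (PP n)"
  shows "(\<integral>\<^sup>+ mu. f (Rl n l mu) \<partial>PP n) = (\<integral>\<^sup>+ mu. f mu \<partial>PP n)"
proof -
  interpret product_sigma_finite "\<lambda>_::nat. lborel :: real measure" by (rule psf_lborel)
  let ?I = "{1..<n} - {l}"
  have ins: "{1..<n} = insert l ?I" using l by auto
  have fI: "finite ?I" "l \<notin> ?I" by auto
  have fR: "(\<lambda>mu. f (Rl n l mu)) \<in> borel_measurable (PP n)"
    using measurable_comp[OF Rl_meas[OF l] f] by (simp add: comp_def)
  have PPe: "PiM (insert l ?I) (\<lambda>_. lborel) = PP n" by (simp only: ins[symmetric])
  have fR': "(\<lambda>mu. f (Rl n l mu)) \<in> borel_measurable (PiM (insert l ?I) (\<lambda>_. lborel))"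
    using fR by (simp only: PPe)
  have f': "f \<in> borel_measurable (PiM (insert l ?I) (\<lambda>_. lborel))"
    using f by (simp only: PPe)
  have "(\<integral>\<^sup>+ mu. f (Rl n l mu) \<partial>PP n) = (\<integral>\<^sup>+ x. (\<integral>\<^sup>+ y. f (Rl n l (x(l := y))) \<partial>lborel) \<partial>PiM ?I (\<lambda>_. lborel))"
    unfolding PPe[symmetric] by (rule product_nn_integral_insert[OF fI fR'])
  also have "\<dots> = (\<integral>\<^sup>+ x. (\<integral>\<^sup>+ y. f (x(l := y)) \<partial>lborel) \<partial>PiM ?I (\<lambda>_. lborel))"
  proof (rule nn_integral_cong)
    fix x assume x: "x \<in> space (PiM ?I (\<lambda>_. lborel :: real measure))"
    let ?s = "\<Sum>k\<in>?I. x k"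
    have gm: "(\<lambda>y. f (x(l := y))) \<in> borel_measurable lborel"
      using measurable_comp[OF measurable_component_update[OF x fI(2)] f'] 
      by (simp add: comp_def)
    have "\<And>y. Rl n l (x(l := y)) = x(l := (1 - ?s) + (-1) * y)"
    proof -
      fix y
      have "(\<Sum>k\<in>{1..<n}. (x(l := y)) k) = y + (\<Sum>k\<in>?I. (x(l := y)) k)"
        using sum.remove[of "{1..<n}" l "x(l := y)"] l by simp
      also have "(\<Sum>k\<in>?I. (x(l := y)) k) = ?s" by (rule sum.cong) auto
      finally show "Rl n l (x(l := y)) = x(l := (1 - ?s) + (-1) * y)"
        unfolding Rl_def by (simp add: algebra_simps)
    qed
    then have "(\<integral>\<^sup>+ y. f (Rl n l (x(l := y))) \<partial>lborel) = (\<integral>\<^sup>+ y. f (x(l := (1 - ?s) + (-1) * y)) \<partial>lborel)"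
      by simp
    also have "\<dots> = (\<integral>\<^sup>+ y. f (x(l := y)) \<partial>lborel)"
      using nn_integral_real_affine[of "\<lambda>y. f (x(l := y))" "-1" "1 - ?s"] gm by simp
    finally show "(\<integral>\<^sup>+ y. f (Rl n l (x(l := y))) \<partial>lborel) = (\<integral>\<^sup>+ y. f (x(l := y)) \<partial>lborel)" .
  qed
  also have "\<dots> = (\<integral>\<^sup>+ mu. f mu \<partial>PP n)"
    unfolding PPe[symmetric] by (rule product_nn_integral_insert[OF fI f', symmetric])
  finally show ?thesis .
qed

lemma Rl_distr:
  assumes l: "l \<in> {1..<n}"
  shows "distr (PP n) (PP n) (Rl n l) = PP n"
proof (rule measure_eqI)
  show "sets (distr (PP n) (PP n) (Rl n l)) = sets (PP n)" by simp
  fix A assume A: "A \<in> sets (distr (PP n) (PP n) (Rl n l))"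
  then have A': "A \<in> sets (PP n)" by simp
  have "emeasure (distr (PP n) (PP n) (Rl n l)) A = (\<integral>\<^sup>+ mu. indicator A mu \<partial>distr (PP n) (PP n) (Rl n l))"
    using A by simp
  also have "\<dots> = (\<integral>\<^sup>+ mu. indicator A (Rl n l mu) \<partial>PP n)"
    using A' by (intro nn_integral_distr Rl_meas l) simp
  also have "\<dots> = (\<integral>\<^sup>+ mu. indicator A mu \<partial>PP n)"
    using A' by (intro Rl_nn l) simp
  also have "\<dots> = emeasure (PP n) A" using A' by simp
  finally show "emeasure (distr (PP n) (PP n) (Rl n l)) A = emeasure (PP n) A" .
qed

definition Gd :: "nat \<Rightarrow> (nat \<Rightarrow> real) \<Rightarrow> (nat \<Rightarrow> real) \<Rightarrow> real" where
  "Gd n b lam = (if \<forall>k<n. lam k > 0 then dirichlet_density n b lam else 0)"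

lemma SS_iff: "n \<ge> 1 \<Longrightarrow> mu \<in> SS n \<longleftrightarrow> (\<forall>k<n. dir_complete n mu k > 0)"
proof
  assume n: "n \<ge> 1" and "mu \<in> SS n" then show "\<forall>k<n. dir_complete n mu k > 0" using dc_pos by blast
next
  assume n: "n \<ge> 1" and h: "\<forall>k<n. dir_complete n mu k > 0"
  have "dir_complete n mu 0 > 0" using h n by auto
  then have "(\<Sum>k\<in>{1..<n}. mu k) < 1" using n by (simp add: dir_complete_def)
  moreover have "\<forall>k\<in>{1..<n}. 0 < mu k" using h by (auto simp: dir_complete_def)
  ultimately show "mu \<in> SS n" by (simp add: SS_def)
qed

lemma FF_Gd: "n \<ge> 1 \<Longrightarrow> FF n b mu = Gd n b (dir_complete n mu)"
  by (simp add: FF_def Gd_def SS_iff)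

lemma Gd_perm:
  assumes s: "bij_betw s {..<n} {..<n}" and l: "\<forall>k<n. lam' k = lam (s k)"
  shows "Gd n (b \<circ> s) lam' = Gd n b lam"
proof -
  have sm: "\<And>k. k < n \<Longrightarrow> s k < n" using s by (auto simp: bij_betw_def)
  have pos: "(\<forall>k<n. lam' k > 0) \<longleftrightarrow> (\<forall>k<n. lam k > 0)"
  proof
    assume h: "\<forall>k<n. lam' k > 0"
    show "\<forall>k<n. lam k > 0"
    proof (intro allI impI)
      fix k assume k: "k < n"
      then have "k \<in> s ` {..<n}" using s by (auto simp: bij_betw_def)
      then obtain j where j: "j < n" "k = s j" by auto
      then show "lam k > 0" using h l by auto
    qed
  next
    assume h: "\<forall>k<n. lam k > 0"
    then show "\<forall>k<n. lam' k > 0" using l sm by auto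
  qed
  have e1: "(\<Sum>k<n. (b \<circ> s) k) = (\<Sum>k<n. b k)"
    using sum.reindex_bij_betw[OF s, of b] by simp
  have e2: "(\<Prod>k<n. Gamma ((b \<circ> s) k)) = (\<Prod>k<n. Gamma (b k))"
    using prod.reindex_bij_betw[OF s, of "\<lambda>k. Gamma (b k)"] by simp
  have e3: "(\<Prod>k<n. lam' k powr ((b \<circ> s) k - 1)) = (\<Prod>k<n. lam k powr (b k - 1))"
  proof -
    have "(\<Prod>k<n. lam' k powr ((b \<circ> s) k - 1)) = (\<Prod>k<n. lam (s k) powr (b (s k) - 1))"
      using l by (intro prod.cong) auto
    also have "\<dots> = (\<Prod>k<n. lam k powr (b k - 1))"
      using prod.reindex_bij_betw[OF s, of "\<lambda>k. lam k powr (b k - 1)"] by simp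
    finally show ?thesis .
  qed
  show ?thesis unfolding Gd_def dirichlet_density_def pos e1 e2 e3 ..
qed

lemma dirichlet_cong: "(\<And>k. k < n \<Longrightarrow> b k = b' k) \<Longrightarrow> dirichlet n b = dirichlet n b'"
proof -
  assume h: "\<And>k. k < n \<Longrightarrow> b k = b' k"
  have "dirichlet_density n b = dirichlet_density n b'"
  proof
    fix lam
    have "(\<Sum>k<n. b k) = (\<Sum>k<n. b' k)" using h by (intro sum.cong) auto
    moreover have "(\<Prod>k<n. Gamma (b k)) = (\<Prod>k<n. Gamma (b' k))" using h by (intro prod.cong) auto
    moreover have "(\<Prod>k<n. lam k powr (b k - 1)) = (\<Prod>k<n. lam k powr (b' k - 1))" using h by (intro prod.cong) auto
    ultimately show "dirichlet_density n b lam = dirichlet_density n b' lam"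
      unfolding dirichlet_density_def by simp
  qed
  then show ?thesis unfolding dirichlet_def by simp
qed

lemma pos_on_comp: "pos_on n b \<Longrightarrow> bij_betw s {..<n} {..<n} \<Longrightarrow> pos_on n (b \<circ> s)"
  by (auto simp: pos_on_def bij_betw_def)

lemma dir_perm_gen:
  assumes n: "n \<ge> 1" and p: "pos_on n b"
    and T: "T \<in> measurable (PP n) (PP n)" and Td: "distr (PP n) (PP n) T = PP n"
    and s: "bij_betw s {..<n} {..<n}"
    and hc: "\<And>mu. mu \<in> space (PP n) \<Longrightarrow> dir_complete n (T mu) = restrict (dir_complete n mu \<circ> s) {..<n}"
  shows "distr (dirichlet n b) (QQ n) (\<lambda>lam. restrict (lam \<circ> s) {..<n}) = dirichlet n (b \<circ> s)"
proof -
  have sm: "s \<in> {..<n} \<rightarrow> {..<n}" using s by (auto simp: bij_betw_def)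
  have Pm: "(\<lambda>lam. restrict (lam \<circ> s) {..<n}) \<in> measurable (QQ n) (QQ n)"
    by (rule restrict_comp_meas[OF _ sm]) simp
  let ?D = "density (PP n) (\<lambda>mu. ennreal (FF n b mu))"
  have T': "T \<in> measurable ?D (PP n)" using T by simp
  have "distr (dirichlet n b) (QQ n) (\<lambda>lam. restrict (lam \<circ> s) {..<n})
      = distr ?D (QQ n) ((\<lambda>lam. restrict (lam \<circ> s) {..<n}) \<circ> dir_complete n)"
    unfolding dirichlet_alt by (rule distr_distr[OF Pm]) simp
  also have "\<dots> = distr ?D (QQ n) (dir_complete n \<circ> T)"
    by (rule distr_cong) (auto simp: hc)
  also have "\<dots> = distr (distr ?D (PP n) T) (QQ n) (dir_complete n)"
    by (rule distr_distr[symmetric, OF dir_complete_meas T'])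
  also have "distr ?D (PP n) T = density (PP n) (\<lambda>mu. ennreal (FF n (b \<circ> s) mu))"
  proof -
    have "density (distr (PP n) (PP n) T) (\<lambda>mu. ennreal (FF n (b \<circ> s) mu))
        = distr (density (PP n) (\<lambda>mu. ennreal (FF n (b \<circ> s) (T mu)))) (PP n) T"
      by (rule density_distr) (use T in auto)
    also have "density (PP n) (\<lambda>mu. ennreal (FF n (b \<circ> s) (T mu))) = ?D"
    proof (rule density_cong)
      show "(\<lambda>mu. ennreal (FF n (b \<circ> s) (T mu))) \<in> borel_measurable (PP n)"
        using T by measurable
      show "(\<lambda>mu. ennreal (FF n b mu)) \<in> borel_measurable (PP n)" by measurable
      show "AE mu in PP n. ennreal (FF n (b \<circ> s) (T mu)) = ennreal (FF n b mu)"
      proof (rule AE_I2)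
        fix mu assume mu: "mu \<in> space (PP n)"
        have "FF n (b \<circ> s) (T mu) = Gd n (b \<circ> s) (dir_complete n (T mu))" by (rule FF_Gd[OF n])
        also have "\<dots> = Gd n b (dir_complete n mu)"
          by (rule Gd_perm[OF s]) (use s in \<open>auto simp: hc[OF mu] bij_betw_def\<close>)
        also have "\<dots> = FF n b mu" by (rule FF_Gd[OF n, symmetric])
        finally show "ennreal (FF n (b \<circ> s) (T mu)) = ennreal (FF n b mu)" by simp
      qed
    qed
    finally show ?thesis unfolding Td by (simp add: comp_def)
  qed
  finally show ?thesis by (simp only: dirichlet_alt[of n "b \<circ> s"])
qed

definition sw :: "nat \<Rightarrow> nat \<Rightarrow> nat" where
  "sw l k = (if k = 0 then l else if k = l then 0 else k)"

lemma sw_sw[simp]: "sw l (sw l k) = k"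
  by (simp add: sw_def)

lemma sw_bij: "l < n \<Longrightarrow> bij_betw (sw l) {..<n} {..<n}"
  by (rule bij_betwI[of _ _ _ "sw l"]) (auto simp: sw_def)

lemma bij_fix0:
  fixes n :: nat
  assumes s: "bij_betw s {..<n} {..<n}" and s0: "s 0 = 0"
  shows "bij_betw s {1..<n} {1..<n}"
proof -
  have inj: "inj_on s {..<n}" using s by (simp add: bij_betw_def)
  have im: "s ` {..<n} = {..<n}" using s by (simp add: bij_betw_def)
  have "s ` {1..<n} = {1..<n}"
  proof
    show "s ` {1..<n} \<subseteq> {1..<n}"
    proof
      fix y assume "y \<in> s ` {1..<n}"
      then obtain k where k: "k \<in> {1..<n}" "y = s k" by auto
      have "s k < n" using im k by auto
      moreover have "s k \<noteq> 0"
      proof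
        assume "s k = 0"
        then have "s k = s 0" using s0 by simp
        moreover have "k \<in> {..<n}" "0 \<in> {..<n}" using k by auto
        ultimately have "k = 0" using inj by (blast dest: inj_onD)
        then show False using k by simp
      qed
      ultimately show "y \<in> {1..<n}" using k by auto
    qed
  next
    show "{1..<n} \<subseteq> s ` {1..<n}"
    proof
      fix y assume y: "y \<in> {1..<n}"
      then have "y \<in> s ` {..<n}" using im by auto
      then obtain k where k: "k < n" "y = s k" by auto
      have "k \<noteq> 0"
      proof
        assume "k = 0"
        with k y s0 show False by simp
      qed
      then show "y \<in> s ` {1..<n}" using k by auto
    qed
  qed
  moreover have "inj_on s {1..<n}" using inj by (rule inj_on_subset) auto
  ultimately show ?thesis by (simp add: bij_betw_def)
qed

lemma dir_perm0:
  assumes n: "n \<ge> 1" and p: "pos_on n b" and s: "bij_betw s {..<n} {..<n}" and s0: "s 0 = 0"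
  shows "distr (dirichlet n b) (QQ n) (\<lambda>lam. restrict (lam \<circ> s) {..<n}) = dirichlet n (b \<circ> s)"
proof -
  have s1: "bij_betw s {1..<n} {1..<n}" by (rule bij_fix0[OF s s0])
  have s1m: "s \<in> {1..<n} \<rightarrow> {1..<n}" using s1 by (auto simp: bij_betw_def)
  show ?thesis
  proof (rule dir_perm_gen[OF n p])
    show "(\<lambda>mu. restrict (mu \<circ> s) {1..<n}) \<in> measurable (PP n) (PP n)"
      by (rule restrict_comp_meas[OF _ s1m]) simp
    show "distr (PP n) (PP n) (\<lambda>mu. restrict (mu \<circ> s) {1..<n}) = PP n"
      by (rule PiM_perm[OF _ s1]) simp
    show "bij_betw s {..<n} {..<n}" by (rule s)
    fix mu
    show "dir_complete n (restrict (mu \<circ> s) {1..<n}) = restrict (dir_complete n mu \<circ> s) {..<n}"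
    proof
      fix k
      show "dir_complete n (restrict (mu \<circ> s) {1..<n}) k = restrict (dir_complete n mu \<circ> s) {..<n} k"
      proof (cases "k < n")
        case False then show ?thesis by (simp add: dir_complete_def)
      next
        case True
        show ?thesis
        proof (cases "k = 0")
          case True
          have "(\<Sum>j\<in>{1..<n}. restrict (mu \<circ> s) {1..<n} j) = (\<Sum>j\<in>{1..<n}. mu (s j))"
            by (rule sum.cong) auto
          also have "\<dots> = (\<Sum>j\<in>{1..<n}. mu j)" by (rule sum.reindex_bij_betw[OF s1])
          finally show ?thesis using True n s0 by (simp add: dir_complete_def)
        next
          case False
          then have "k \<in> {1..<n}" using \<open>k < n\<close> by auto
          moreover then have "s k \<in> {1..<n}" using s1m by auto
          ultimately show ?thesis using False \<open>k < n\<close> by (auto simp: dir_complete_def)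
        qed
      qed
    qed
  qed
qed

lemma dir_swap:
  assumes n: "n \<ge> 1" and p: "pos_on n b" and l: "l \<in> {1..<n}"
  shows "distr (dirichlet n b) (QQ n) (\<lambda>lam. restrict (lam \<circ> sw l) {..<n}) = dirichlet n (b \<circ> sw l)"
proof (rule dir_perm_gen[OF n p Rl_meas[OF l] Rl_distr[OF l] sw_bij])
  show "l < n" using l by simp
  fix mu
  show "dir_complete n (Rl n l mu) = restrict (dir_complete n mu \<circ> sw l) {..<n}"
  proof
    fix k
    show "dir_complete n (Rl n l mu) k = restrict (dir_complete n mu \<circ> sw l) {..<n} k"
    proof (cases "k < n")
      case False then show ?thesis by (simp add: dir_complete_def)
    next
      case kn: True
      have sr: "(\<Sum>j\<in>{1..<n}. mu j) = mu l + (\<Sum>j\<in>{1..<n} - {l}. mu j)"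
        using sum.remove[of "{1..<n}" l mu] l by simp
      have sR: "(\<Sum>j\<in>{1..<n}. Rl n l mu j) = Rl n l mu l + (\<Sum>j\<in>{1..<n} - {l}. Rl n l mu j)"
        using sum.remove[of "{1..<n}" l "Rl n l mu"] l by simp
      have sR2: "(\<Sum>j\<in>{1..<n} - {l}. Rl n l mu j) = (\<Sum>j\<in>{1..<n} - {l}. mu j)"
        by (rule sum.cong) (auto simp: Rl_def)
      show ?thesis
      proof (cases "k = 0")
        case True
        have RL: "Rl n l mu l = 1 - (\<Sum>j\<in>{1..<n}. mu j)" by (simp add: Rl_def)
        have "dir_complete n (Rl n l mu) k = 1 - (\<Sum>j\<in>{1..<n}. Rl n l mu j)"
          using True kn by (simp add: dir_complete_def)
        also have "\<dots> = mu l" unfolding sR sR2 RL using sr by linarith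
        also have "mu l = restrict (dir_complete n mu \<circ> sw l) {..<n} k"
          using True kn l by (simp add: dir_complete_def sw_def)
        finally show ?thesis .
      next
        case False
        then show ?thesis using kn l by (auto simp: dir_complete_def Rl_def sw_def)
      qed
    qed
  qed
qed

definition cyc :: "nat \<Rightarrow> nat \<Rightarrow> nat \<Rightarrow> nat" where
  "cyc n l k = (l + k) mod n"

lemma cyc_bij:
  assumes n: "n \<ge> 1" and l: "l < n"
  shows "bij_betw (cyc n l) {..<n} {..<n}"
proof (rule bij_betwI[of _ _ _ "\<lambda>k. (k + (n - l)) mod n"])
  show "cyc n l \<in> {..<n} \<rightarrow> {..<n}" using n by (auto simp: cyc_def)
  show "(\<lambda>k. (k + (n - l)) mod n) \<in> {..<n} \<rightarrow> {..<n}" using n by auto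
  fix k assume k: "k \<in> {..<n}"
  have "((l + k) mod n + (n - l)) mod n = (l + k + (n - l)) mod n" by (simp add: mod_add_left_eq)
  also have "l + k + (n - l) = k + n" using l by simp
  also have "(k + n) mod n = k" using k by simp
  finally show "(cyc n l k + (n - l)) mod n = k" by (simp add: cyc_def)
next
  fix k assume k: "k \<in> {..<n}"
  have "(l + (k + (n - l)) mod n) mod n = (l + (k + (n - l))) mod n" by (simp add: mod_add_right_eq)
  also have "l + (k + (n - l)) = k + n" using l by simp
  also have "(k + n) mod n = k" using k by simp
  finally show "cyc n l ((k + (n - l)) mod n) = k" by (simp add: cyc_def)
qed

lemma Pmeas: "bij_betw s {..<n} {..<n} \<Longrightarrow> (\<lambda>lam. restrict (lam \<circ> s) {..<n}) \<in> measurable (QQ n) (QQ n)"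
  by (rule restrict_comp_meas) (auto simp: bij_betw_def)

lemma dir_cyc:
  assumes n: "n \<ge> 1" and p: "pos_on n b" and l: "l < n"
  shows "distr (dirichlet n b) (QQ n) (\<lambda>lam. restrict (lam \<circ> cyc n l) {..<n}) = dirichlet n (b \<circ> cyc n l)"
proof (cases "l = 0")
  case True
  have "cyc n l 0 = 0" using True by (simp add: cyc_def)
  then show ?thesis by (rule dir_perm0[OF n p cyc_bij[OF n l]])
next
  case False
  then have l1: "l \<in> {1..<n}" using l by auto
  let ?pm = "sw l \<circ> cyc n l"
  have bpm: "bij_betw ?pm {..<n} {..<n}"
    by (rule bij_betw_trans[OF cyc_bij[OF n l] sw_bij[OF l]])
  have pm0: "?pm 0 = 0" using l by (simp add: cyc_def sw_def)
  have "distr (dirichlet n b) (QQ n) (\<lambda>lam. restrict (lam \<circ> cyc n l) {..<n})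
      = distr (dirichlet n b) (QQ n) ((\<lambda>lam. restrict (lam \<circ> ?pm) {..<n}) \<circ> (\<lambda>lam. restrict (lam \<circ> sw l) {..<n}))"
  proof (rule distr_cong)
    fix lam
    show "restrict (lam \<circ> cyc n l) {..<n} = ((\<lambda>lam. restrict (lam \<circ> ?pm) {..<n}) \<circ> (\<lambda>lam. restrict (lam \<circ> sw l) {..<n})) lam"
    proof
      fix k
      show "restrict (lam \<circ> cyc n l) {..<n} k = ((\<lambda>lam. restrict (lam \<circ> ?pm) {..<n}) \<circ> (\<lambda>lam. restrict (lam \<circ> sw l) {..<n})) lam k"
        using bpm by (auto simp: bij_betw_def)
    qed
  qed simp_all
  also have "\<dots> = distr (distr (dirichlet n b) (QQ n) (\<lambda>lam. restrict (lam \<circ> sw l) {..<n})) (QQ n) (\<lambda>lam. restrict (lam \<circ> ?pm) {..<n})"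
    by (rule distr_distr[symmetric, OF Pmeas[OF bpm]]) (simp add: dirichlet_def Pmeas[OF sw_bij[OF l]])
  also have "\<dots> = distr (dirichlet n (b \<circ> sw l)) (QQ n) (\<lambda>lam. restrict (lam \<circ> ?pm) {..<n})"
    by (simp only: dir_swap[OF n p l1])
  also have "\<dots> = dirichlet n (b \<circ> sw l \<circ> ?pm)"
    by (rule dir_perm0[OF n pos_on_comp[OF p sw_bij[OF l]] bpm pm0])
  also have "b \<circ> sw l \<circ> ?pm = b \<circ> cyc n l" by (auto simp: comp_def)
  finally show ?thesis .
qed

lemma dir_shift_cong:
  assumes n: "n \<ge> 1" and l: "l < n"
  shows "dirichlet n (dir_shift n alpha l) = dirichlet n ((alpha(l := alpha l + 1)) \<circ> cyc n l)"
proof (rule dirichlet_cong)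
  fix k assume k: "k < n"
  have e: "(l + k) mod n = l \<longleftrightarrow> k = 0"
  proof
    assume h: "(l + k) mod n = l"
    show "k = 0"
    proof (cases "l + k < n")
      case True then show ?thesis using h by simp
    next
      case False
      then have "(l + k) mod n = (l + k - n) mod n" by (simp add: le_mod_geq)
      also have "\<dots> = l + k - n" using k l by simp
      finally show ?thesis using h k by simp
    qed
  next
    assume "k = 0" then show "(l + k) mod n = l" using l by simp
  qed
  show "dir_shift n alpha l k = ((alpha(l := alpha l + 1)) \<circ> cyc n l) k"
    unfolding dir_shift_def cyc_def using e by auto
qed

lemma dir_shift_int:
  fixes H :: "(nat \<Rightarrow> real) \<Rightarrow> real"
  assumes n: "n \<ge> 1" and p: "pos_on n alpha" and l: "l < n" and H: "H \<in> borel_measurable (QQ n)"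
  shows "integral\<^sup>L (dirichlet n (dir_shift n alpha l)) H
       = integral\<^sup>L (dirichlet n (alpha(l := alpha l + 1))) (\<lambda>mu. H (restrict (mu \<circ> cyc n l) {..<n}))"
proof -
  have "dirichlet n (dir_shift n alpha l) = distr (dirichlet n (alpha(l := alpha l + 1))) (QQ n) (\<lambda>lam. restrict (lam \<circ> cyc n l) {..<n})"
    unfolding dir_shift_cong[OF n l] by (rule dir_cyc[OF n pos_on_upd[OF p] l, symmetric])
  then show ?thesis
    using integral_distr[OF _ H, of "\<lambda>lam. restrict (lam \<circ> cyc n l) {..<n}" "dirichlet n (alpha(l := alpha l + 1))"]
      Pmeas[OF cyc_bij[OF n l]] by (simp add: dirichlet_def)
qed

lemma sum_PiE_insert:
  fixes F :: "('a \<Rightarrow> 'b) \<Rightarrow> real"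
  assumes K: "finite K" and a: "a \<notin> K" and B: "finite B"
  shows "(\<Sum>j\<in>PiE (insert a K) (\<lambda>_. B). F j) = (\<Sum>t\<in>B. \<Sum>j\<in>PiE K (\<lambda>_. B). F (j(a := t)))"
proof -
  have "(\<Sum>j\<in>PiE (insert a K) (\<lambda>_. B). F j) = (\<Sum>(t, j)\<in>B \<times> PiE K (\<lambda>_. B). F (j(a := t)))"
    using a by (intro sum.reindex_bij_witness[of _ "\<lambda>(y,g). g(a := y)" "\<lambda>g. (g a, g(a := undefined))"])
       (auto simp: PiE_def extensional_def)
  also have "\<dots> = (\<Sum>t\<in>B. \<Sum>j\<in>PiE K (\<lambda>_. B). F (j(a := t)))"
    by (subst sum.cartesian_product) auto
  finally show ?thesis .
qed

lemma card_PiE_const: "finite K \<Longrightarrow> card (PiE K (\<lambda>_. B)) = card B ^ card K"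
  by (simp add: card_PiE)

lemma sum_PiE_one:
  fixes phi :: "nat \<Rightarrow> real"
  assumes K: "finite K" and k: "k \<in> K" and B: "finite B"
  shows "(\<Sum>j\<in>PiE K (\<lambda>_. B). phi (j k)) = real (card B) ^ (card K - 1) * (\<Sum>t\<in>B. phi t)"
proof -
  have ins: "K = insert k (K - {k})" using k by auto
  have "(\<Sum>j\<in>PiE K (\<lambda>_. B). phi (j k)) = (\<Sum>j\<in>PiE (insert k (K - {k})) (\<lambda>_. B). phi (j k))"
    using ins by simp
  also have "\<dots> = (\<Sum>t\<in>B. \<Sum>j\<in>PiE (K - {k}) (\<lambda>_. B). phi ((j(k := t)) k))"
    by (rule sum_PiE_insert) (use K B in auto)
  also have "\<dots> = (\<Sum>t\<in>B. \<Sum>j\<in>PiE (K - {k}) (\<lambda>_. B). phi t)" by simp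
  also have "\<dots> = (\<Sum>t\<in>B. real (card B) ^ (card K - 1) * phi t)"
    using K k by (simp add: card_PiE_const)
  finally show ?thesis by (simp add: sum_distrib_left)
qed

lemma sum_PiE_two:
  fixes psi :: "nat \<Rightarrow> nat \<Rightarrow> real"
  assumes K: "finite K" and k: "k \<in> K" and k': "k' \<in> K" and kk: "k \<noteq> k'" and B: "finite B"
  shows "(\<Sum>j\<in>PiE K (\<lambda>_. B). psi (j k) (j k')) = real (card B) ^ (card K - 2) * (\<Sum>t\<in>B. \<Sum>t'\<in>B. psi t t')"
proof -
  have ins: "K = insert k (K - {k})" using k by auto
  have "(\<Sum>j\<in>PiE K (\<lambda>_. B). psi (j k) (j k')) = (\<Sum>j\<in>PiE (insert k (K - {k})) (\<lambda>_. B). psi (j k) (j k'))"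
    using ins by simp
  also have "\<dots> = (\<Sum>t\<in>B. \<Sum>j\<in>PiE (K - {k}) (\<lambda>_. B). psi ((j(k := t)) k) ((j(k := t)) k'))"
    by (rule sum_PiE_insert) (use K B in auto)
  also have "\<dots> = (\<Sum>t\<in>B. \<Sum>j\<in>PiE (K - {k}) (\<lambda>_. B). psi t (j k'))" using kk by simp
  also have "\<dots> = (\<Sum>t\<in>B. real (card B) ^ (card (K - {k}) - 1) * (\<Sum>t'\<in>B. psi t t'))"
    using K k' kk B by (intro sum.cong refl sum_PiE_one) auto
  also have "card (K - {k}) - 1 = card K - 2" using K k by simp
  finally show ?thesis by (simp add: sum_distrib_left)
qed

lemma card_ge2: "finite K \<Longrightarrow> k \<in> K \<Longrightarrow> k' \<in> K \<Longrightarrow> k \<noteq> k' \<Longrightarrow> card K \<ge> 2"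
proof -
  assume K: "finite K" and k: "k \<in> K" and k': "k' \<in> K" and kk: "k \<noteq> k'"
  have "{k, k'} \<subseteq> K" using k k' by auto
  then have "card {k, k'} \<le> card K" using K by (rule card_mono[rotated])
  then show ?thesis using kk by simp
qed

lemma avg_one:
  fixes phi :: "nat \<Rightarrow> real"
  assumes K: "finite K" and k: "k \<in> K" and m: "m > 0"
  shows "(\<Sum>j\<in>PiE K (\<lambda>_. {..<m}). phi (j k)) / real m ^ card K = (\<Sum>t<m. phi t) / real m"
proof -
  have c: "card K \<ge> 1" using K k by (metis One_nat_def Suc_leI card_gt_0_iff empty_iff)
  have "real m ^ card K = real m ^ (card K - 1) * real m"
    using c by (metis Suc_diff_le diff_Suc_1 power_Suc2)
  then show ?thesis using m by (simp add: sum_PiE_one[OF K k])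
qed

lemma avg_two:
  fixes psi :: "nat \<Rightarrow> nat \<Rightarrow> real"
  assumes K: "finite K" and k: "k \<in> K" and k': "k' \<in> K" and kk: "k \<noteq> k'" and m: "m > 0"
  shows "(\<Sum>j\<in>PiE K (\<lambda>_. {..<m}). psi (j k) (j k')) / real m ^ card K = (\<Sum>t<m. \<Sum>t'<m. psi t t') / real m ^ 2"
proof -
  have c: "card K \<ge> 2" by (rule card_ge2[OF K k k' kk])
  have "real m ^ card K = real m ^ ((card K - 2) + 2)" using c by (simp only: le_add_diff_inverse2)
  also have "\<dots> = real m ^ (card K - 2) * real m ^ 2" by (rule power_add)
  finally have "real m ^ card K = real m ^ (card K - 2) * real m ^ 2" .
  then show ?thesis using m by (simp add: sum_PiE_two[OF K k k' kk])
qed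

lemma avg_lin:
  fixes phi :: "nat \<Rightarrow> real"
  assumes K: "finite K" and m: "m > 0"
  shows "(\<Sum>j\<in>PiE K (\<lambda>_. {..<m}). \<Sum>k\<in>K. lam k * phi (j k)) / real m ^ card K
       = (\<Sum>k\<in>K. lam k) * ((\<Sum>t<m. phi t) / real m)"
proof -
  have "(\<Sum>j\<in>PiE K (\<lambda>_. {..<m}). \<Sum>k\<in>K. lam k * phi (j k)) / real m ^ card K
      = (\<Sum>k\<in>K. lam k * ((\<Sum>j\<in>PiE K (\<lambda>_. {..<m}). phi (j k)) / real m ^ card K))"
    by (subst sum.swap) (simp add: sum_divide_distrib sum_distrib_left)
  also have "\<dots> = (\<Sum>k\<in>K. lam k * ((\<Sum>t<m. phi t) / real m))"
    by (intro sum.cong refl) (simp add: avg_one[OF K _ m])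
  finally show ?thesis by (simp add: sum_divide_distrib sum_distrib_right)
qed

lemma avg_quad:
  fixes psi :: "nat \<Rightarrow> nat \<Rightarrow> real"
  assumes K: "finite K" and m: "m > 0"
  shows "(\<Sum>j\<in>PiE K (\<lambda>_. {..<m}). \<Sum>k\<in>K. \<Sum>k'\<in>K. lam k * lam k' * psi (j k) (j k')) / real m ^ card K
       = (\<Sum>k\<in>K. lam k ^ 2) * ((\<Sum>t<m. psi t t) / real m)
         + ((\<Sum>k\<in>K. lam k) ^ 2 - (\<Sum>k\<in>K. lam k ^ 2)) * ((\<Sum>t<m. \<Sum>t'<m. psi t t') / real m ^ 2)"
proof -
  let ?A = "(\<Sum>t<m. psi t t) / real m" and ?B = "(\<Sum>t<m. \<Sum>t'<m. psi t t') / real m ^ 2"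
  have "(\<Sum>j\<in>PiE K (\<lambda>_. {..<m}). \<Sum>k\<in>K. \<Sum>k'\<in>K. lam k * lam k' * psi (j k) (j k')) / real m ^ card K
      = (\<Sum>k\<in>K. \<Sum>k'\<in>K. lam k * lam k' * ((\<Sum>j\<in>PiE K (\<lambda>_. {..<m}). psi (j k) (j k')) / real m ^ card K))"
  proof -
    let ?P = "PiE K (\<lambda>_. {..<m})"
    have "(\<Sum>j\<in>?P. \<Sum>k\<in>K. \<Sum>k'\<in>K. lam k * lam k' * psi (j k) (j k'))
        = (\<Sum>k\<in>K. \<Sum>j\<in>?P. \<Sum>k'\<in>K. lam k * lam k' * psi (j k) (j k'))" by (rule sum.swap)
    also have "\<dots> = (\<Sum>k\<in>K. \<Sum>k'\<in>K. \<Sum>j\<in>?P. lam k * lam k' * psi (j k) (j k'))"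
      by (intro sum.cong refl sum.swap)
    also have "\<dots> = (\<Sum>k\<in>K. \<Sum>k'\<in>K. lam k * lam k' * (\<Sum>j\<in>?P. psi (j k) (j k')))"
      by (simp add: sum_distrib_left)
    finally show ?thesis by (simp add: sum_divide_distrib[symmetric])
  qed
  also have "\<dots> = (\<Sum>k\<in>K. \<Sum>k'\<in>K. lam k * lam k' * (if k = k' then ?A else ?B))"
  proof (intro sum.cong refl)
    fix k k' assume k: "k \<in> K" and k': "k' \<in> K"
    show "lam k * lam k' * ((\<Sum>j\<in>PiE K (\<lambda>_. {..<m}). psi (j k) (j k')) / real m ^ card K)
        = lam k * lam k' * (if k = k' then ?A else ?B)"
    proof (cases "k = k'")
      case True
      then show ?thesis using avg_one[OF K k m, of "\<lambda>t. psi t t"] by simp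
    next
      case False
      then show ?thesis using avg_two[OF K k k' False m] by simp
    qed
  qed
  also have "\<dots> = (\<Sum>k\<in>K. \<Sum>k'\<in>K. lam k * lam k' * ?B) + (\<Sum>k\<in>K. lam k ^ 2 * (?A - ?B))"
  proof -
    have "\<And>k. k \<in> K \<Longrightarrow> (\<Sum>k'\<in>K. lam k * lam k' * (if k = k' then ?A else ?B))
        = (\<Sum>k'\<in>K. lam k * lam k' * ?B) + lam k ^ 2 * (?A - ?B)"
    proof -
      fix k assume k: "k \<in> K"
      have "(\<Sum>k'\<in>K. lam k * lam k' * (if k = k' then ?A else ?B))
          = (\<Sum>k'\<in>K. lam k * lam k' * ?B + (if k = k' then lam k * lam k' * (?A - ?B) else 0))"
        by (intro sum.cong refl) (simp add: algebra_simps)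
      also have "\<dots> = (\<Sum>k'\<in>K. lam k * lam k' * ?B) + lam k ^ 2 * (?A - ?B)"
        using K k by (simp add: sum.distrib power2_eq_square)
      finally show "(\<Sum>k'\<in>K. lam k * lam k' * (if k = k' then ?A else ?B))
        = (\<Sum>k'\<in>K. lam k * lam k' * ?B) + lam k ^ 2 * (?A - ?B)" .
    qed
    then show ?thesis by (simp add: sum.distrib)
  qed
  also have "(\<Sum>k\<in>K. \<Sum>k'\<in>K. lam k * lam k' * ?B) = (\<Sum>k\<in>K. lam k) ^ 2 * ?B"
  proof -
    have sq: "(\<Sum>k\<in>K. \<Sum>k'\<in>K. lam k * lam k' * c) = (\<Sum>k\<in>K. lam k) ^ 2 * c" for c :: real
      by (simp add: power2_eq_square sum_distrib_left sum_distrib_right algebra_simps)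
    show ?thesis by (rule sq)
  qed
  also have "(\<Sum>k\<in>K. lam k ^ 2 * (?A - ?B)) = (\<Sum>k\<in>K. lam k ^ 2) * (?A - ?B)"
    by (simp add: sum_distrib_right)
  finally show ?thesis by (simp add: algebra_simps)
qed

lemma taylor2_peano:
  fixes F :: "real^'p \<Rightarrow> real" and gradf :: "real^'p \<Rightarrow> real^'p" and hessf :: "real^'p \<Rightarrow> real^'p^'p"
    and h h' h'' :: "real \<Rightarrow> real" and x0 :: "real^'p" and yy :: real
  assumes fg: "\<forall>z. (F has_derivative (\<lambda>v. gradf z \<bullet> v)) (at z)"
    and fh: "\<forall>z. (gradf has_derivative (\<lambda>v. hessf z *v v)) (at z)"
    and h1: "\<forall>t. (h has_real_derivative h' t) (at t)"
    and h2: "\<forall>t. (h' has_real_derivative h'' t) (at t)"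
    and e: "e > 0"
  shows "\<exists>\<delta>>0. \<forall>u. norm u < \<delta> \<longrightarrow>
     \<bar>(h (F (x0 + u)) - yy * F (x0 + u))
      - ((h (F x0) - yy * F x0) + (h' (F x0) - yy) * (gradf x0 \<bullet> u)
         + 1/2 * (h'' (F x0) * (gradf x0 \<bullet> u)^2 + (h' (F x0) - yy) * (u \<bullet> (hessf x0 *v u))))\<bar>
     \<le> e * norm u ^ 2"
proof -
  define g where "g = gradf x0"
  define H where "H = hessf x0"
  define a where "a = h' (F x0) - yy"
  define b where "b = h'' (F x0)"
  define V where "V w = (h' (F (x0 + w)) - yy) *\<^sub>R gradf (x0 + w)" for w
  define DV where "DV v = a *\<^sub>R (H *v v) + (b * (g \<bullet> v)) *\<^sub>R g" for v
  have tr: "((\<lambda>w. x0 + w) has_derivative (\<lambda>v. v)) (at 0)"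
    by (auto intro!: derivative_eq_intros)
  have dF0: "((\<lambda>w. F (x0 + w)) has_derivative (\<lambda>v. g \<bullet> v)) (at 0)"
    using has_derivative_compose[OF tr fg[rule_format, of "x0 + 0"]] by (simp add: g_def)
  have dh0: "((\<lambda>w. h' (F (x0 + w))) has_derivative (\<lambda>v. b * (g \<bullet> v))) (at 0)"
  proof -
    have "(h' has_derivative (*) (h'' (F (x0 + 0)))) (at (F (x0 + 0)))"
      using h2 by (simp add: has_field_derivative_def)
    from has_derivative_compose[OF dF0 this] show ?thesis by (simp add: b_def)
  qed
  have dG0: "((\<lambda>w. gradf (x0 + w)) has_derivative (\<lambda>v. H *v v)) (at 0)"
    using has_derivative_compose[OF tr fh[rule_format, of "x0 + 0"]] by (simp add: H_def)
  have dV: "(V has_derivative DV) (at 0)"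
  proof -
    have d1: "((\<lambda>w. h' (F (x0 + w)) - yy) has_derivative (\<lambda>v. b * (g \<bullet> v) - 0)) (at 0)"
      by (intro has_derivative_diff dh0 has_derivative_const)
    have "((\<lambda>w. (h' (F (x0 + w)) - yy) *\<^sub>R gradf (x0 + w)) has_derivative
        (\<lambda>v. (h' (F (x0 + 0)) - yy) *\<^sub>R (H *v v) + (b * (g \<bullet> v) - 0) *\<^sub>R gradf (x0 + 0))) (at 0)"
      by (rule has_derivative_scaleR[OF d1 dG0])
    moreover have "(\<lambda>v. (h' (F (x0 + 0)) - yy) *\<^sub>R (H *v v) + (b * (g \<bullet> v) - 0) *\<^sub>R gradf (x0 + 0)) = DV"
      by (auto simp: DV_def a_def g_def)
    ultimately show ?thesis unfolding V_def[abs_def] by simp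
  qed
  then obtain d where d: "d > 0" and dd: "\<And>w. norm w < d \<Longrightarrow> norm (V w - V 0 - DV w) \<le> e * norm w"
    using e unfolding has_derivative_at_alt by force
  show ?thesis
  proof (intro exI[of _ d] conjI allI impI d)
    fix u :: "real^'p" assume u: "norm u < d"
    define C1 where "C1 = a * (g \<bullet> u)"
    define C2 where "C2 = b * (g \<bullet> u)^2 + a * (u \<bullet> (H *v u))"
    define k where "k t = F (x0 + t *\<^sub>R u)" for t
    define k' where "k' t = gradf (x0 + t *\<^sub>R u) \<bullet> u" for t
    define gam where "gam t = h (k t) - yy * k t - (h (F x0) - yy * F x0) - t * C1 - t^2 / 2 * C2" for t
    define gam' where "gam' t = h' (k t) * k' t - yy * k' t - C1 - t * C2" for t
    have kd: "(k has_real_derivative k' t) (at t)" for t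
    proof -
      have "((\<lambda>t. x0 + t *\<^sub>R u) has_derivative (\<lambda>s. s *\<^sub>R u)) (at t)"
        by (auto intro!: derivative_eq_intros)
      from has_derivative_compose[OF this fg[rule_format, of "x0 + t *\<^sub>R u"]]
      have "(k has_derivative (\<lambda>s. gradf (x0 + t *\<^sub>R u) \<bullet> (s *\<^sub>R u))) (at t)"
        by (simp add: k_def[abs_def])
      moreover have "(\<lambda>s. gradf (x0 + t *\<^sub>R u) \<bullet> (s *\<^sub>R u)) = (*) (k' t)"
        by (auto simp: k'_def)
      ultimately show ?thesis by (simp add: has_field_derivative_def)
    qed
    have hk: "((\<lambda>t. h (k t)) has_real_derivative h' (k t) * k' t) (at t)" for t
      using DERIV_chain'[OF kd h1[rule_format]] by simp
    have gd: "(gam has_real_derivative gam' t) (at t)" for t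
      unfolding gam_def[abs_def] gam'_def
      by (rule derivative_eq_intros hk kd refl | simp)+
    obtain z where z: "0 < z" "z < 1" and mvt: "gam 1 - gam 0 = (1 - 0) * gam' z"
      using MVT2[of 0 1 gam gam'] gd by auto
    have g0: "gam 0 = 0" by (simp add: gam_def k_def)
    have g1: "gam 1 = (h (F (x0 + u)) - yy * F (x0 + u))
      - ((h (F x0) - yy * F x0) + (h' (F x0) - yy) * (gradf x0 \<bullet> u)
         + 1/2 * (h'' (F x0) * (gradf x0 \<bullet> u)^2 + (h' (F x0) - yy) * (u \<bullet> (hessf x0 *v u))))"
      by (simp add: gam_def k_def C1_def C2_def a_def b_def g_def H_def algebra_simps)
    have gz: "gam' z = (V (z *\<^sub>R u) - V 0 - DV (z *\<^sub>R u)) \<bullet> u"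
      by (simp add: gam'_def V_def DV_def k_def k'_def C1_def C2_def a_def g_def
          inner_diff_left inner_add_left matrix_vector_mult_scaleR inner_commute[of u "H *v u"] algebra_simps power2_eq_square)
    have zu: "z * norm u \<le> norm u" using z by (intro mult_left_le_one_le) auto
    then have nz: "norm (z *\<^sub>R u) < d" using u z by simp
    have "\<bar>gam' z\<bar> \<le> norm (V (z *\<^sub>R u) - V 0 - DV (z *\<^sub>R u)) * norm u"
      unfolding gz by (rule Cauchy_Schwarz_ineq2)
    also have "\<dots> \<le> e * norm (z *\<^sub>R u) * norm u"
      by (rule mult_right_mono[OF dd[OF nz]]) simp
    also have "\<dots> \<le> e * norm u * norm u"
      using z e zu by (intro mult_right_mono mult_left_mono) auto
    finally have "\<bar>gam 1\<bar> \<le> e * norm u ^ 2" using mvt g0 by (simp add: power2_eq_square mult.assoc)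
    then show "\<bar>(h (F (x0 + u)) - yy * F (x0 + u))
      - ((h (F x0) - yy * F x0) + (h' (F x0) - yy) * (gradf x0 \<bullet> u)
         + 1/2 * (h'' (F x0) * (gradf x0 \<bullet> u)^2 + (h' (F x0) - yy) * (u \<bullet> (hessf x0 *v u))))\<bar>
     \<le> e * norm u ^ 2" unfolding g1 .
  qed
qed

lemma finite_delta:
  fixes P :: "nat \<Rightarrow> real \<Rightarrow> bool"
  assumes "\<And>i. i < (m::nat) \<Longrightarrow> \<exists>\<delta>>0. P i \<delta>"
    and mono: "\<And>i \<delta> \<delta>'. P i \<delta> \<Longrightarrow> 0 < \<delta>' \<Longrightarrow> \<delta>' \<le> \<delta> \<Longrightarrow> P i \<delta>'"
  shows "\<exists>\<delta>>0. \<forall>i<m. P i \<delta>"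
  using assms(1)
proof (induction m)
  case 0 then show ?case by (intro exI[of _ 1]) auto
next
  case (Suc m)
  then obtain d1 where d1: "d1 > 0" "\<forall>i<m. P i d1" by auto
  obtain d2 where d2: "d2 > 0" "P m d2" using Suc.prems by blast
  show ?case
  proof (intro exI[of _ "min d1 d2"] conjI allI impI)
    show "min d1 d2 > 0" using d1 d2 by simp
    fix i assume "i < Suc m"
    then show "P i (min d1 d2)"
    proof (cases "i < m")
      case True then show ?thesis using d1 d2 mono[of i d1 "min d1 d2"] by simp
    next
      case False then have "i = m" using \<open>i < Suc m\<close> by simp
      then show ?thesis using d1 d2 mono[of m d2 "min d1 d2"] by simp
    qed
  qed
qed

lemma norm_d_bound:
  fixes w :: "nat \<Rightarrow> real^'p"
  assumes K: "finite K" and W: "\<And>k. k \<in> K \<Longrightarrow> norm (w k) \<le> Wc"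
  shows "norm (\<Sum>k\<in>K. lam k *\<^sub>R w k) \<le> real (card K) * Wc * sqrt (\<Sum>k\<in>K. lam k ^ 2)"
proof -
  let ?S = "\<Sum>k\<in>K. lam k ^ 2"
  have lk: "\<bar>lam k\<bar> \<le> sqrt ?S" if k: "k \<in> K" for k
  proof -
    have "lam k ^ 2 \<le> ?S" using K k by (intro member_le_sum) auto
    then have "\<bar>lam k\<bar> ^ 2 \<le> ?S" by simp
    then show ?thesis by (rule real_le_rsqrt)
  qed
  have "norm (\<Sum>k\<in>K. lam k *\<^sub>R w k) \<le> (\<Sum>k\<in>K. norm (lam k *\<^sub>R w k))" by (rule norm_sum)
  also have "\<dots> \<le> (\<Sum>k\<in>K. sqrt ?S * Wc)"
  proof (intro sum_mono)
    fix k assume k: "k \<in> K"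
    have S0: "?S \<ge> 0" by (intro sum_nonneg) auto
    have "norm (lam k *\<^sub>R w k) = \<bar>lam k\<bar> * norm (w k)" by simp
    also have "\<dots> \<le> sqrt ?S * Wc" using lk[OF k] W[OF k] S0 by (intro mult_mono) auto
    finally show "norm (lam k *\<^sub>R w k) \<le> sqrt ?S * Wc" .
  qed
  finally show ?thesis by (simp add: algebra_simps)
qed

lemma avg_abs_bound:
  fixes a :: "nat \<Rightarrow> (nat \<Rightarrow> nat) \<Rightarrow> real"
  assumes m: "m > 0" and K: "finite K" and B: "\<And>i j. i < m \<Longrightarrow> j \<in> PiE K (\<lambda>_. {..<m}) \<Longrightarrow> \<bar>a i j\<bar> \<le> Bd"
  shows "\<bar>1 / real m * (\<Sum>i<m. 1 / real m ^ card K * (\<Sum>j\<in>PiE K (\<lambda>_. {..<m}). a i j))\<bar> \<le> Bd"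
proof -
  have inner: "\<bar>1 / real m ^ card K * (\<Sum>j\<in>PiE K (\<lambda>_. {..<m}). a i j)\<bar> \<le> Bd" if i: "i < m" for i
  proof -
    have "\<bar>\<Sum>j\<in>PiE K (\<lambda>_. {..<m}). a i j\<bar> \<le> (\<Sum>j\<in>PiE K (\<lambda>_. {..<m}). \<bar>a i j\<bar>)" by (rule sum_abs)
    also have "\<dots> \<le> (\<Sum>j\<in>PiE K (\<lambda>_. {..<m}). Bd)" using B[OF i] by (intro sum_mono) auto
    also have "\<dots> = real m ^ card K * Bd" using K by (simp add: card_PiE_const)
    finally show ?thesis using m by (simp add: abs_mult field_simps)
  qed
  have "\<bar>\<Sum>i<m. 1 / real m ^ card K * (\<Sum>j\<in>PiE K (\<lambda>_. {..<m}). a i j)\<bar> \<le> (\<Sum>i<m. Bd)"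
    by (rule order.trans[OF sum_abs sum_mono]) (use inner in auto)
  then show ?thesis using m by (simp add: abs_mult field_simps)
qed

lemma rho_littleo:
  fixes n m :: nat and x :: "nat \<Rightarrow> real^'p" and y :: "nat \<Rightarrow> real"
    and f :: "'t \<Rightarrow> real^'p \<Rightarrow> real" and theta :: 't
    and gradf :: "real^'p \<Rightarrow> real^'p" and hessf :: "real^'p \<Rightarrow> real^'p^'p"
    and h h' h'' :: "real \<Rightarrow> real"
  assumes m_pos: "m > 0"
    and f_grad: "\<forall>z. (f theta has_derivative (\<lambda>v. gradf z \<bullet> v)) (at z)"
    and f_hess: "\<forall>z. (gradf has_derivative (\<lambda>v. hessf z *v v)) (at z)"
    and h_d1: "\<forall>t. (h has_real_derivative h' t) (at t)"
    and h_d2: "\<forall>t. (h' has_real_derivative h'' t) (at t)"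
  shows "\<forall>e>0. \<exists>\<delta>>0. \<forall>lam. (\<forall>k<n. 0 \<le> lam k) \<and> (\<Sum>k<n. lam k) = 1
                 \<and> (\<Sum>k\<in>{1..<n}. lam k ^ 2) < \<delta>\<^sup>2
                 \<longrightarrow> \<bar>mix_remainder n m h h' h'' f gradf hessf theta x y lam\<bar> \<le> e * (\<Sum>k\<in>{1..<n}. lam k ^ 2)"
proof (intro allI impI)
  fix e :: real assume e: "e > 0"
  define K where "K = {1..<n}"
  define Xm where "Xm = (\<Sum>t<m. norm (x t))"
  define W where "W = real (card K) * (2 * Xm)"
  have Xm0: "Xm \<ge> 0" unfolding Xm_def by (intro sum_nonneg) auto
  have W0: "W \<ge> 0" unfolding W_def using Xm0 by simp
  have xb: "norm (x t) \<le> Xm" if "t < m" for t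
    unfolding Xm_def using that by (intro member_le_sum) auto
  define e' where "e' = e / (W^2 + 1)"
  have "W^2 + 1 > 0" by (smt (verit) zero_le_power2)
  then have e': "e' > 0" unfolding e'_def using e by (intro divide_pos_pos)
  define phi where "phi i u = (h (f theta (x i + u)) - y i * f theta (x i + u))
      - ((h (f theta (x i)) - y i * f theta (x i)) + (h' (f theta (x i)) - y i) * (gradf (x i) \<bullet> u)
         + 1/2 * (h'' (f theta (x i)) * (gradf (x i) \<bullet> u)^2 + (h' (f theta (x i)) - y i) * (u \<bullet> (hessf (x i) *v u))))" for i u
  have "\<exists>\<delta>>0. \<forall>i<m. \<forall>u. norm u < \<delta> \<longrightarrow> \<bar>phi i u\<bar> \<le> e' * norm u ^ 2"
  proof (rule finite_delta)
    fix i assume "i < m"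
    show "\<exists>\<delta>>0. \<forall>u. norm u < \<delta> \<longrightarrow> \<bar>phi i u\<bar> \<le> e' * norm u ^ 2"
      unfolding phi_def by (rule taylor2_peano[OF f_grad f_hess h_d1 h_d2 e'])
  qed auto
  then obtain d0 where d0: "d0 > 0" and dd: "\<And>i u. i < m \<Longrightarrow> norm u < d0 \<Longrightarrow> \<bar>phi i u\<bar> \<le> e' * norm u ^ 2"
    by blast
  define dl where "dl = d0 / (W + 1)"
  have dl: "dl > 0" unfolding dl_def using d0 W0 by simp
  show "\<exists>\<delta>>0. \<forall>lam. (\<forall>k<n. 0 \<le> lam k) \<and> (\<Sum>k<n. lam k) = 1
                 \<and> (\<Sum>k\<in>{1..<n}. lam k ^ 2) < \<delta>\<^sup>2
                 \<longrightarrow> \<bar>mix_remainder n m h h' h'' f gradf hessf theta x y lam\<bar> \<le> e * (\<Sum>k\<in>{1..<n}. lam k ^ 2)"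
  proof (intro exI[of _ dl] conjI allI impI dl)
    fix lam :: "nat \<Rightarrow> real"
    assume "(\<forall>k<n. 0 \<le> lam k) \<and> (\<Sum>k<n. lam k) = 1 \<and> (\<Sum>k\<in>{1..<n}. lam k ^ 2) < dl\<^sup>2"
    then have S: "(\<Sum>k\<in>K. lam k ^ 2) < dl\<^sup>2" unfolding K_def by simp
    define S2 where "S2 = (\<Sum>k\<in>K. lam k ^ 2)"
    have S20: "S2 \<ge> 0" unfolding S2_def by (intro sum_nonneg) auto
    have "sqrt S2 < sqrt (dl\<^sup>2)" using S unfolding S2_def by (simp only: real_sqrt_less_iff)
    then have sq: "sqrt S2 < dl" using dl by simp
    have trm: "\<bar>phi i (\<Sum>k\<in>K. lam k *\<^sub>R (x (j k) - x i))\<bar> \<le> e * S2"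
      if i: "i < m" and j: "j \<in> PiE K (\<lambda>_. {..<m})" for i j
    proof -
      let ?d = "\<Sum>k\<in>K. lam k *\<^sub>R (x (j k) - x i)"
      have wb: "norm (x (j k) - x i) \<le> 2 * Xm" if "k \<in> K" for k
      proof -
        have "j k < m" using j that by auto
        then have "norm (x (j k)) \<le> Xm" by (rule xb)
        moreover have "norm (x i) \<le> Xm" using i by (rule xb)
        ultimately show ?thesis using norm_triangle_ineq4[of "x (j k)" "x i"] by simp
      qed
      have nd: "norm ?d \<le> W * sqrt S2"
        using norm_d_bound[of K "\<lambda>k. x (j k) - x i" "2 * Xm" lam] wb unfolding W_def S2_def K_def
        by (simp add: mult.assoc)
      have "W * sqrt S2 \<le> W * dl" using sq W0 by (intro mult_left_mono) auto
      also have "W * dl < d0" unfolding dl_def using d0 W0 by (simp add: field_simps)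
      finally have "norm ?d < d0" using nd by simp
      then have "\<bar>phi i ?d\<bar> \<le> e' * norm ?d ^ 2" by (rule dd[OF i])
      also have "\<dots> \<le> e' * (W * sqrt S2) ^ 2"
        using nd e' by (intro mult_left_mono power_mono) auto
      also have "\<dots> = e' * W^2 * S2" using S20 by (simp add: power_mult_distrib)
      also have "\<dots> \<le> e * S2"
      proof -
        have p: "W^2 + 1 > 0" by (smt (verit) zero_le_power2)
        have q: "W^2 / (W^2 + 1) \<le> 1" using p by (simp add: divide_le_eq_1)
        have "e' * W^2 = e * (W^2 / (W^2 + 1))" unfolding e'_def by simp
        also have "\<dots> \<le> e * 1" using q e by (intro mult_left_mono) auto
        finally have "e' * W^2 \<le> e" by simp
        then show ?thesis using S20 by (intro mult_right_mono) auto
      qed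
      finally show ?thesis .
    qed
    have cardK: "card K = n - 1" unfolding K_def by simp
    have "mix_remainder n m h h' h'' f gradf hessf theta x y lam
        = 1 / real m * (\<Sum>i<m. 1 / real m ^ card K * (\<Sum>j\<in>PiE K (\<lambda>_. {..<m}). phi i (\<Sum>k\<in>K. lam k *\<^sub>R (x (j k) - x i))))"
      unfolding mix_remainder_def phi_def K_def Let_def loss_def fst_conv snd_conv card_atLeastLessThan
      by (rule refl)
    also have "\<bar>\<dots>\<bar> \<le> e * S2"
      by (rule avg_abs_bound[OF m_pos]) (use trm in \<open>auto simp: K_def\<close>)
    finally show "\<bar>mix_remainder n m h h' h'' f gradf hessf theta x y lam\<bar> \<le> e * (\<Sum>k\<in>{1..<n}. lam k ^ 2)"
      unfolding S2_def K_def .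
  qed
qed

lemma mv_sum: "(H::real^'p^'p) *v (\<Sum>k\<in>K. c k *\<^sub>R v k) = (\<Sum>k\<in>K. c k *\<^sub>R (H *v v k))"
proof (cases "finite K")
  case True
  then show ?thesis
    by (induction K rule: finite_induct) (auto simp: matrix_vector_right_distrib matrix_vector_mult_scaleR)
qed simp

lemma mat_sum_mv: "(\<Sum>j\<in>J. M j) *v (z::real^'p) = (\<Sum>j\<in>J. M j *v z)"
proof (cases "finite J")
  case True
  then show ?thesis
    by (induction J rule: finite_induct) (auto simp: matrix_vector_mult_add_rdistrib)
qed simp

lemma outer_mv: "outer u v *v z = (v \<bullet> z) *\<^sub>R u"
  by (simp add: outer_def matrix_vector_mult_def vec_eq_iff inner_vec_def sum_distrib_left algebra_simps)

lemma inner_outer_sum: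
  "(g::real^'p) \<bullet> (((1 / real m) *\<^sub>R (\<Sum>t<m. outer (w t) (w t))) *v g) = 1 / real m * (\<Sum>t<m. (g \<bullet> w t)^2)"
proof -
  have "((1 / real m) *\<^sub>R (\<Sum>t<m. outer (w t) (w t))) *v g = (1 / real m) *\<^sub>R ((\<Sum>t<m. outer (w t) (w t)) *v g)"
    by (simp add: scaleR_matrix_vector_assoc)
  also have "(\<Sum>t<m. outer (w t) (w t)) *v g = (\<Sum>t<m. (w t \<bullet> g) *\<^sub>R w t)"
    by (simp add: mat_sum_mv outer_mv)
  finally show ?thesis
    by (simp add: inner_sum_right inner_commute power2_eq_square)
qed

lemma inner_outer: "(g::real^'p) \<bullet> (outer e e *v g) = (g \<bullet> e)^2"
  by (simp add: outer_mv inner_commute power2_eq_square)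

lemma sq_sum: "(\<Sum>k\<in>K. (a k :: real))^2 = (\<Sum>k\<in>K. \<Sum>k'\<in>K. a k * a k')"
  by (simp add: power2_eq_square sum_product)

lemma aux_div: "(M::real) > 0 \<Longrightarrow> 1/M * (M*Lc + a*SX + 1/2*(b*SY + a*SZ)) = Lc + a*(SX/M) + 1/2*(b*(SY/M) + a*(SZ/M))"
  by (simp add: field_simps)

lemma avg_T:
  fixes w :: "nat \<Rightarrow> real^'p" and g :: "real^'p" and H :: "real^'p^'p" and K :: "nat set"
    and lam :: "nat \<Rightarrow> real"
  assumes K: "finite K" and m: "m > 0"
  defines "Er \<equiv> (1 / real m) *\<^sub>R (\<Sum>t<m. w t)"
  shows "1 / real m ^ card K * (\<Sum>j\<in>PiE K (\<lambda>_. {..<m}).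
            (let d = (\<Sum>k\<in>K. lam k *\<^sub>R w (j k)) in
              Lc + a * (g \<bullet> d) + 1/2 * (b * (g \<bullet> d)^2 + a * (d \<bullet> (H *v d)))))
       = Lc + a * (\<Sum>k\<in>K. lam k) * (g \<bullet> Er)
         + 1/2 * (b * ((\<Sum>k\<in>K. lam k ^ 2) * (1 / real m * (\<Sum>t<m. (g \<bullet> w t)^2))
                       + ((\<Sum>k\<in>K. lam k)^2 - (\<Sum>k\<in>K. lam k ^ 2)) * (g \<bullet> Er)^2)
                 + a * ((\<Sum>k\<in>K. lam k ^ 2) * (1 / real m * (\<Sum>t<m. w t \<bullet> (H *v w t)))
                       + ((\<Sum>k\<in>K. lam k)^2 - (\<Sum>k\<in>K. lam k ^ 2)) * (Er \<bullet> (H *v Er))))"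
proof -
  let ?P = "PiE K (\<lambda>_. {..<m})"
  let ?M = "real m ^ card K"
  let ?s = "\<Sum>k\<in>K. lam k" and ?S2 = "\<Sum>k\<in>K. lam k ^ 2"
  define X where "X j = (\<Sum>k\<in>K. lam k * (g \<bullet> w (j k)))" for j :: "nat \<Rightarrow> nat"
  define Y where "Y j = (\<Sum>k\<in>K. \<Sum>k'\<in>K. lam k * lam k' * ((g \<bullet> w (j k)) * (g \<bullet> w (j k'))))" for j :: "nat \<Rightarrow> nat"
  define Z where "Z j = (\<Sum>k\<in>K. \<Sum>k'\<in>K. lam k * lam k' * (w (j k) \<bullet> (H *v w (j k'))))" for j :: "nat \<Rightarrow> nat"
  have M0: "?M > 0" using m by simp
  have cP: "card ?P = m ^ card K" using K by (simp add: card_PiE_const)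
  have e1: "\<And>j. g \<bullet> (\<Sum>k\<in>K. lam k *\<^sub>R w (j k)) = X j"
    by (simp add: X_def inner_sum_right)
  have e2: "\<And>j. (g \<bullet> (\<Sum>k\<in>K. lam k *\<^sub>R w (j k)))^2 = Y j"
    unfolding e1 X_def Y_def sq_sum by (simp add: algebra_simps)
  have e3: "\<And>j. (\<Sum>k\<in>K. lam k *\<^sub>R w (j k)) \<bullet> (H *v (\<Sum>k\<in>K. lam k *\<^sub>R w (j k))) = Z j"
  proof -
    fix j :: "nat \<Rightarrow> nat"
    have "(\<Sum>k\<in>K. lam k *\<^sub>R w (j k)) \<bullet> (H *v (\<Sum>k\<in>K. lam k *\<^sub>R w (j k)))
       = (\<Sum>k\<in>K. \<Sum>k'\<in>K. lam k * (lam k' * (w (j k') \<bullet> (H *v w (j k)))))"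
      unfolding mv_sum by (simp add: inner_sum_left inner_sum_right sum_distrib_left algebra_simps)
    also have "\<dots> = Z j" unfolding Z_def by (subst sum.swap) (simp add: algebra_simps)
    finally show "(\<Sum>k\<in>K. lam k *\<^sub>R w (j k)) \<bullet> (H *v (\<Sum>k\<in>K. lam k *\<^sub>R w (j k))) = Z j" .
  qed
  have "(\<Sum>j\<in>?P. (let d = (\<Sum>k\<in>K. lam k *\<^sub>R w (j k)) in
              Lc + a * (g \<bullet> d) + 1/2 * (b * (g \<bullet> d)^2 + a * (d \<bullet> (H *v d)))))
      = (\<Sum>j\<in>?P. Lc + a * X j + 1/2 * (b * Y j + a * Z j))"
  proof -
    have e2': "\<And>j. (X j)^2 = Y j" using e2 unfolding e1 .
    show ?thesis unfolding Let_def e3 e1 e2' ..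
  qed
  also have "\<dots> = ?M * Lc + a * (\<Sum>j\<in>?P. X j) + 1/2 * (b * (\<Sum>j\<in>?P. Y j) + a * (\<Sum>j\<in>?P. Z j))"
    by (simp only: sum.distrib sum_distrib_left[symmetric] sum_constant cP of_nat_power)
  finally have eqS: "(\<Sum>j\<in>?P. (let d = (\<Sum>k\<in>K. lam k *\<^sub>R w (j k)) in
              Lc + a * (g \<bullet> d) + 1/2 * (b * (g \<bullet> d)^2 + a * (d \<bullet> (H *v d)))))
      = ?M * Lc + a * (\<Sum>j\<in>?P. X j) + 1/2 * (b * (\<Sum>j\<in>?P. Y j) + a * (\<Sum>j\<in>?P. Z j))" .
  have s1: "1 / ?M * (\<Sum>j\<in>?P. (let d = (\<Sum>k\<in>K. lam k *\<^sub>R w (j k)) in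
              Lc + a * (g \<bullet> d) + 1/2 * (b * (g \<bullet> d)^2 + a * (d \<bullet> (H *v d)))))
      = Lc + a * ((\<Sum>j\<in>?P. X j) / ?M) + 1/2 * (b * ((\<Sum>j\<in>?P. Y j) / ?M) + a * ((\<Sum>j\<in>?P. Z j) / ?M))"
    unfolding eqS by (rule aux_div[OF M0])
  have gE: "g \<bullet> Er = (\<Sum>t<m. g \<bullet> w t) / real m"
    unfolding Er_def by (simp add: inner_sum_right)
  have aX: "(\<Sum>j\<in>?P. X j) / ?M = ?s * (g \<bullet> Er)"
    unfolding X_def gE by (rule avg_lin[OF K m])
  have aY: "(\<Sum>j\<in>?P. Y j) / ?M = ?S2 * (1 / real m * (\<Sum>t<m. (g \<bullet> w t)^2)) + (?s^2 - ?S2) * (g \<bullet> Er)^2"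
  proof -
    have "(g \<bullet> Er)^2 = (\<Sum>t<m. \<Sum>t'<m. (g \<bullet> w t) * (g \<bullet> w t')) / real m ^ 2"
      unfolding gE by (simp add: power_divide sq_sum)
    then show ?thesis unfolding Y_def using avg_quad[OF K m, of lam "\<lambda>t t'. (g \<bullet> w t) * (g \<bullet> w t')"]
      by (simp add: power2_eq_square)
  qed
  have aZ: "(\<Sum>j\<in>?P. Z j) / ?M = ?S2 * (1 / real m * (\<Sum>t<m. w t \<bullet> (H *v w t))) + (?s^2 - ?S2) * (Er \<bullet> (H *v Er))"
  proof -
    have "Er \<bullet> (H *v Er) = (\<Sum>t<m. \<Sum>t'<m. w t \<bullet> (H *v w t')) / real m ^ 2"
    proof -
      have hs: "H *v (\<Sum>t<m. w t) = (\<Sum>t<m. H *v w t)" using mv_sum[of H "\<lambda>_. 1" w "{..<m}"] by simp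
      show ?thesis unfolding Er_def
        apply (simp add: matrix_vector_mult_scaleR hs inner_sum_left inner_sum_right sum_divide_distrib power2_eq_square)
        by (subst sum.swap) (rule refl)
    qed
    then show ?thesis unfolding Z_def using avg_quad[OF K m, of lam "\<lambda>t t'. w t \<bullet> (H *v w t')"]
      by simp
  qed
  show ?thesis unfolding s1 aX aY aZ by (simp only: mult.assoc)
qed

lemma sum4:
  fixes A B C D :: "nat \<Rightarrow> real"
  shows "1 / M * (\<Sum>t\<in>T. A t + s * B t + S * (1/2 * C t) + Q * (1/2 * D t))
    = 1 / M * (\<Sum>t\<in>T. A t) + (1 / M * (\<Sum>t\<in>T. B t)) * s + (1 / (2 * M) * (\<Sum>t\<in>T. C t)) * S
      + (1 / (2 * M) * (\<Sum>t\<in>T. D t)) * Q"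
proof -
  have "(\<Sum>t\<in>T. A t + s * B t + S * (1/2 * C t) + Q * (1/2 * D t))
      = (\<Sum>t\<in>T. A t) + s * (\<Sum>t\<in>T. B t) + S * (1/2 * (\<Sum>t\<in>T. C t)) + Q * (1/2 * (\<Sum>t\<in>T. D t))"
    by (simp only: sum.distrib sum_distrib_left[symmetric])
  then show ?thesis by (simp add: algebra_simps)
qed

lemma sum5:
  fixes w I1 I2 I3 I4 :: "nat \<Rightarrow> real"
  shows "(\<Sum>l\<in>L. w l * (s0 + b * I1 l + c * I2 l + d * I3 l + I4 l))
    = s0 * (\<Sum>l\<in>L. w l) + b * (\<Sum>l\<in>L. w l * I1 l) + c * (\<Sum>l\<in>L. w l * I2 l) + d * (\<Sum>l\<in>L. w l * I3 l)
      + (\<Sum>l\<in>L. w l * I4 l)"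
proof -
  have "(\<Sum>l\<in>L. w l * (s0 + b * I1 l + c * I2 l + d * I3 l + I4 l))
      = (\<Sum>l\<in>L. s0 * w l + b * (w l * I1 l) + c * (w l * I2 l) + d * (w l * I3 l) + w l * I4 l)"
    by (intro sum.cong refl) (simp add: algebra_simps)
  also have "\<dots> = s0 * (\<Sum>l\<in>L. w l) + b * (\<Sum>l\<in>L. w l * I1 l) + c * (\<Sum>l\<in>L. w l * I2 l) + d * (\<Sum>l\<in>L. w l * I3 l)
      + (\<Sum>l\<in>L. w l * I4 l)"
    by (simp only: sum.distrib sum_distrib_left[symmetric])
  finally show ?thesis .
qed

lemma Delta_le1: "lam \<in> Delta n \<Longrightarrow> k < n \<Longrightarrow> 0 \<le> lam k \<and> lam k \<le> 1"
proof -
  assume l: "lam \<in> Delta n" and k: "k < n"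
  have "lam k \<le> (\<Sum>j<n. lam j)" using l k by (intro member_le_sum) (auto simp: Delta_def)
  then show ?thesis using l k by (auto simp: Delta_def)
qed

lemma comp_QQ: "k < n \<Longrightarrow> (\<lambda>lam. lam k) \<in> borel_measurable (QQ n)"
  by (rule comp_meas) simp

lemma bounded_cont_image:
  fixes F :: "real^'p \<Rightarrow> real"
  assumes "continuous_on UNIV F"
  shows "\<exists>B. \<forall>v. norm v \<le> R \<longrightarrow> \<bar>F v\<bar> \<le> B"
proof -
  have "compact (F ` cball 0 R)"
    by (rule compact_continuous_image) (use assms in \<open>auto intro: continuous_on_subset\<close>)
  then have "bounded (F ` cball 0 R)" by (rule compact_imp_bounded)
  then obtain B where "\<forall>z\<in>F ` cball 0 R. norm z \<le> B" unfolding bounded_iff by blast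
  then show ?thesis by (intro exI[of _ B]) auto
qed

lemma dir_integral_cong:
  fixes f g :: "(nat \<Rightarrow> real) \<Rightarrow> real"
  assumes n: "n \<ge> 1" and p: "pos_on n b" and f: "f \<in> borel_measurable (QQ n)" and g: "g \<in> borel_measurable (QQ n)"
    and eq: "\<And>lam. lam \<in> Delta n \<Longrightarrow> f lam = g lam"
  shows "integral\<^sup>L (dirichlet n b) f = integral\<^sup>L (dirichlet n b) g"
proof -
  have "(\<integral> mu. FF n b mu * f (dir_complete n mu) \<partial>PP n) = (\<integral> mu. FF n b mu * g (dir_complete n mu) \<partial>PP n)"
  proof (rule Bochner_Integration.integral_cong[OF refl])
    fix mu
    show "FF n b mu * f (dir_complete n mu) = FF n b mu * g (dir_complete n mu)"
    proof (cases "mu \<in> SS n")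
      case True then show ?thesis using eq[OF dc_Delta[OF n True]] by simp
    next
      case False then show ?thesis by (simp add: FF_def)
    qed
  qed
  then show ?thesis by (simp add: dir_integral[OF n p f] dir_integral[OF n p g])
qed

lemma PiE_perm_bij:
  assumes s: "bij_betw s {..<n} {..<n}"
  shows "bij_betw (\<lambda>i. restrict (i \<circ> s) {..<n}) (PiE {..<n} (\<lambda>_. B)) (PiE {..<n} (\<lambda>_. B))"
proof (rule bij_betwI[of _ _ _ "\<lambda>i. restrict (i \<circ> inv_into {..<n} s) {..<n}"])
  have sm: "\<And>k. k < n \<Longrightarrow> s k < n" using s by (auto simp: bij_betw_def)
  have s': "bij_betw (inv_into {..<n} s) {..<n} {..<n}" using s by (rule bij_betw_inv_into)
  have sm': "\<And>k. k < n \<Longrightarrow> inv_into {..<n} s k < n" using s' by (auto simp: bij_betw_def)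
  show "(\<lambda>i. restrict (i \<circ> s) {..<n}) \<in> PiE {..<n} (\<lambda>_. B) \<rightarrow> PiE {..<n} (\<lambda>_. B)"
    using sm by (auto simp: PiE_def Pi_def)
  show "(\<lambda>i. restrict (i \<circ> inv_into {..<n} s) {..<n}) \<in> PiE {..<n} (\<lambda>_. B) \<rightarrow> PiE {..<n} (\<lambda>_. B)"
    using sm' by (auto simp: PiE_def Pi_def)
  fix i assume i: "i \<in> PiE {..<n} (\<lambda>_. B)"
  show "restrict (restrict (i \<circ> s) {..<n} \<circ> inv_into {..<n} s) {..<n} = i"
  proof
    fix k show "restrict (restrict (i \<circ> s) {..<n} \<circ> inv_into {..<n} s) {..<n} k = i k"
      using i sm' s by (cases "k < n") (auto simp: bij_betw_inv_into_right PiE_def extensional_def)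
  qed
next
  have sm: "\<And>k. k < n \<Longrightarrow> s k < n" using s by (auto simp: bij_betw_def)
  fix i assume i: "i \<in> PiE {..<n} (\<lambda>_. B)"
  show "restrict (restrict (i \<circ> inv_into {..<n} s) {..<n} \<circ> s) {..<n} = i"
  proof
    fix k show "restrict (restrict (i \<circ> inv_into {..<n} s) {..<n} \<circ> s) {..<n} k = i k"
      using i sm s by (cases "k < n") (auto simp: bij_betw_inv_into_left PiE_def extensional_def)
  qed
qed

context
  fixes n m :: nat and alpha :: "nat \<Rightarrow> real"
    and x :: "nat \<Rightarrow> real^'p" and y :: "nat \<Rightarrow> real"
    and f :: "'t \<Rightarrow> real^'p \<Rightarrow> real" and theta :: 't
    and gradf :: "real^'p \<Rightarrow> real^'p" and hessf :: "real^'p \<Rightarrow> real^'p^'p"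
    and h h' h'' :: "real \<Rightarrow> real"
  assumes n2: "n \<ge> 2"
    and alpha_pos: "\<forall>k<n. alpha k > 0"
    and m_pos: "m > 0"
    and f_grad: "\<forall>z. (f theta has_derivative (\<lambda>v. gradf z \<bullet> v)) (at z)"
    and f_hess: "\<forall>z. (gradf has_derivative (\<lambda>v. hessf z *v v)) (at z)"
    and h_d1: "\<forall>t. (h has_real_derivative h' t) (at t)"
    and h_d2: "\<forall>t. (h' has_real_derivative h'' t) (at t)"
begin

lemma n1: "n \<ge> 1" using n2 by simp

lemma posa: "pos_on n alpha" using alpha_pos by (simp add: pos_on_def)

lemma cont_h: "continuous_on UNIV h"
  using h_d1 by (intro continuous_at_imp_continuous_on) (auto intro: DERIV_isCont)

lemma cont_f: "continuous_on UNIV (f theta)"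
  using f_grad by (intro continuous_at_imp_continuous_on) (auto intro: has_derivative_continuous)

lemma cont_hf: "continuous_on UNIV (\<lambda>v. h (f theta v))"
  by (rule continuous_on_compose2[OF cont_h cont_f]) auto

lemma loss_meas:
  assumes V: "V \<in> borel_measurable M" and Y: "Y \<in> borel_measurable M"
  shows "(\<lambda>z. loss h f theta (V z, Y z)) \<in> borel_measurable M"
proof -
  have 1: "(\<lambda>z. h (f theta (V z))) \<in> borel_measurable M"
    using borel_measurable_continuous_on[OF cont_hf V] .
  have 2: "(\<lambda>z. f theta (V z)) \<in> borel_measurable M"
    using borel_measurable_continuous_on[OF cont_f V] .
  show ?thesis unfolding loss_def fst_conv snd_conv using 1 2 Y by measurable
qed

lemma V_meas: "(\<lambda>lam. \<Sum>k<n. lam k *\<^sub>R x (i k)) \<in> borel_measurable (QQ n)"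
  by (intro borel_measurable_sum borel_measurable_scaleR comp_QQ borel_measurable_const) auto

lemma Y_meas: "(\<lambda>lam. \<Sum>k<n. lam k * y (i k)) \<in> borel_measurable (QQ n)"
  by (intro borel_measurable_sum borel_measurable_times comp_QQ borel_measurable_const) auto

definition "Xm = (\<Sum>t<m. norm (x t))"
definition "Ym = (\<Sum>t<m. \<bar>y t\<bar>)"

lemma xb: "t < m \<Longrightarrow> norm (x t) \<le> Xm"
  unfolding Xm_def by (intro member_le_sum) auto

lemma Ym0: "Ym \<ge> 0" unfolding Ym_def by (intro sum_nonneg) auto

lemma yb: "t < m \<Longrightarrow> \<bar>y t\<bar> \<le> Ym"
  unfolding Ym_def by (intro member_le_sum) auto

lemma V_bound:
  assumes l: "lam \<in> Delta n" and i: "\<forall>k<n. i k < m"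
  shows "norm (\<Sum>k<n. lam k *\<^sub>R x (i k)) \<le> Xm"
proof -
  have "norm (\<Sum>k<n. lam k *\<^sub>R x (i k)) \<le> (\<Sum>k<n. norm (lam k *\<^sub>R x (i k)))" by (rule norm_sum)
  also have "\<dots> \<le> (\<Sum>k<n. lam k * Xm)"
  proof (intro sum_mono)
    fix k assume k: "k \<in> {..<n}"
    have "0 \<le> lam k" using Delta_le1[OF l] k by auto
    then show "norm (lam k *\<^sub>R x (i k)) \<le> lam k * Xm" using xb[of "i k"] i k by (auto intro: mult_left_mono)
  qed
  also have "\<dots> = Xm" using l by (simp add: Delta_def sum_distrib_right[symmetric])
  finally show ?thesis .
qed

lemma Y_bound:
  assumes l: "lam \<in> Delta n" and i: "\<forall>k<n. i k < m"
  shows "\<bar>\<Sum>k<n. lam k * y (i k)\<bar> \<le> Ym"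
proof -
  have "\<bar>\<Sum>k<n. lam k * y (i k)\<bar> \<le> (\<Sum>k<n. \<bar>lam k * y (i k)\<bar>)" by (rule sum_abs)
  also have "\<dots> \<le> (\<Sum>k<n. lam k * Ym)"
  proof (intro sum_mono)
    fix k assume k: "k \<in> {..<n}"
    have "0 \<le> lam k" using Delta_le1[OF l] k by auto
    then show "\<bar>lam k * y (i k)\<bar> \<le> lam k * Ym" using yb[of "i k"] i k by (auto simp: abs_mult intro: mult_left_mono)
  qed
  also have "\<dots> = Ym" using l by (simp add: Delta_def sum_distrib_right[symmetric])
  finally show ?thesis .
qed

lemma loss_bound: "\<exists>B. \<forall>v yy. norm v \<le> Xm \<longrightarrow> \<bar>yy\<bar> \<le> Ym \<longrightarrow> \<bar>loss h f theta (v, yy)\<bar> \<le> B"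
proof -
  obtain B1 where B1: "\<And>v. norm v \<le> Xm \<Longrightarrow> \<bar>h (f theta v)\<bar> \<le> B1"
    using bounded_cont_image[OF cont_hf, of Xm] by blast
  obtain B2 where B2: "\<And>v. norm v \<le> Xm \<Longrightarrow> \<bar>f theta v\<bar> \<le> B2"
    using bounded_cont_image[OF cont_f, of Xm] by blast
  show ?thesis
  proof (intro exI[of _ "B1 + Ym * B2"] allI impI)
    fix v :: "real^'p" and yy :: real assume v: "norm v \<le> Xm" and yy: "\<bar>yy\<bar> \<le> Ym"
    have "\<bar>yy * f theta v\<bar> \<le> Ym * B2"
      unfolding abs_mult by (rule mult_mono[OF yy B2[OF v]]) (use Ym0 in auto)
    then show "\<bar>loss h f theta (v, yy)\<bar> \<le> B1 + Ym * B2"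
      using B1[OF v] unfolding loss_def by simp
  qed
qed

lemma int_bounded:
  fixes g :: "(nat \<Rightarrow> real) \<Rightarrow> real"
  assumes p: "pos_on n b" and g: "g \<in> borel_measurable (QQ n)"
    and B: "\<exists>B. \<forall>lam\<in>Delta n. \<bar>g lam\<bar> \<le> B"
  shows "integrable (dirichlet n b) g"
  using B dir_integrable_bounded[OF n1 p g] by blast

lemma int_G:
  assumes p: "pos_on n b" and i: "\<forall>k<n. i k < m" and yy: "\<bar>yy\<bar> \<le> Ym"
  shows "integrable (dirichlet n b) (\<lambda>lam. loss h f theta (\<Sum>k<n. lam k *\<^sub>R x (i k), yy))"
proof (rule int_bounded[OF p])
  show "(\<lambda>lam. loss h f theta (\<Sum>k<n. lam k *\<^sub>R x (i k), yy)) \<in> borel_measurable (QQ n)"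
    by (rule loss_meas[OF V_meas]) simp
  obtain B where B: "\<forall>v yy. norm v \<le> Xm \<longrightarrow> \<bar>yy\<bar> \<le> Ym \<longrightarrow> \<bar>loss h f theta (v, yy)\<bar> \<le> B"
    using loss_bound by blast
  show "\<exists>B. \<forall>lam\<in>Delta n. \<bar>loss h f theta (\<Sum>k<n. lam k *\<^sub>R x (i k), yy)\<bar> \<le> B"
    using B V_bound[OF _ i] yy by blast
qed

lemma int_lamG:
  assumes p: "pos_on n b" and i: "\<forall>k<n. i k < m" and yy: "\<bar>yy\<bar> \<le> Ym" and l: "l < n"
  shows "integrable (dirichlet n b) (\<lambda>lam. lam l * loss h f theta (\<Sum>k<n. lam k *\<^sub>R x (i k), yy))"
proof (rule int_bounded[OF p])
  show "(\<lambda>lam. lam l * loss h f theta (\<Sum>k<n. lam k *\<^sub>R x (i k), yy)) \<in> borel_measurable (QQ n)"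
    by (intro borel_measurable_times comp_QQ[OF l] loss_meas[OF V_meas]) simp
  obtain B where B: "\<forall>v yy. norm v \<le> Xm \<longrightarrow> \<bar>yy\<bar> \<le> Ym \<longrightarrow> \<bar>loss h f theta (v, yy)\<bar> \<le> B"
    using loss_bound by blast
  show "\<exists>B. \<forall>lam\<in>Delta n. \<bar>lam l * loss h f theta (\<Sum>k<n. lam k *\<^sub>R x (i k), yy)\<bar> \<le> B"
  proof (intro exI[of _ B] ballI)
    fix lam assume lam: "lam \<in> Delta n"
    have a: "\<bar>lam l\<bar> \<le> 1" using Delta_le1[OF lam l] by auto
    have b: "\<bar>loss h f theta (\<Sum>k<n. lam k *\<^sub>R x (i k), yy)\<bar> \<le> B" using B V_bound[OF lam i] yy by blast
    have "\<bar>lam l * loss h f theta (\<Sum>k<n. lam k *\<^sub>R x (i k), yy)\<bar> \<le> 1 * B"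
      unfolding abs_mult by (rule mult_mono[OF a b]) auto
    then show "\<bar>lam l * loss h f theta (\<Sum>k<n. lam k *\<^sub>R x (i k), yy)\<bar> \<le> B" by simp
  qed
qed

lemma int_L:
  assumes p: "pos_on n b" and i: "\<forall>k<n. i k < m"
  shows "integrable (dirichlet n b) (\<lambda>lam. loss h f theta (\<Sum>k<n. lam k *\<^sub>R x (i k), \<Sum>k<n. lam k * y (i k)))"
proof (rule int_bounded[OF p])
  show "(\<lambda>lam. loss h f theta (\<Sum>k<n. lam k *\<^sub>R x (i k), \<Sum>k<n. lam k * y (i k))) \<in> borel_measurable (QQ n)"
    by (rule loss_meas[OF V_meas Y_meas])
  obtain B where B: "\<forall>v yy. norm v \<le> Xm \<longrightarrow> \<bar>yy\<bar> \<le> Ym \<longrightarrow> \<bar>loss h f theta (v, yy)\<bar> \<le> B"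
    using loss_bound by blast
  show "\<exists>B. \<forall>lam\<in>Delta n. \<bar>loss h f theta (\<Sum>k<n. lam k *\<^sub>R x (i k), \<Sum>k<n. lam k * y (i k))\<bar> \<le> B"
    using B V_bound[OF _ i] Y_bound[OF _ i] by blast
qed

definition "PI = PiE {..<n} (\<lambda>_. {..<m})"

lemma PI_lt: "i \<in> PI \<Longrightarrow> \<forall>k<n. i k < m"
  unfolding PI_def by auto

lemma finite_PI: "finite PI"
  unfolding PI_def by (intro finite_PiE) auto

definition "Psi lam = 1 / real m ^ n * (\<Sum>i\<in>PI. loss h f theta (\<Sum>k<n. lam k *\<^sub>R x (i k), y (i 0)))"

lemma G_meas: "(\<lambda>lam. loss h f theta (\<Sum>k<n. lam k *\<^sub>R x (i k), yy)) \<in> borel_measurable (QQ n)"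
  by (rule loss_meas[OF V_meas]) simp

lemma Psi_meas: "Psi \<in> borel_measurable (QQ n)"
  unfolding Psi_def[abs_def]
  by (intro borel_measurable_times borel_measurable_const borel_measurable_sum G_meas)

lemma loss_split:
  assumes l: "lam \<in> Delta n"
  shows "loss h f theta (v, \<Sum>k<n. lam k * y (i k)) = (\<Sum>l<n. lam l * loss h f theta (v, y (i l)))"
proof -
  have s: "(\<Sum>l<n. lam l) = 1" using l by (simp add: Delta_def)
  have "(\<Sum>l<n. lam l * loss h f theta (v, y (i l))) = (\<Sum>l<n. lam l * h (f theta v)) - (\<Sum>l<n. lam l * y (i l) * f theta v)"
    unfolding loss_def by (simp add: sum_subtractf right_diff_distrib mult.assoc)
  also have "\<dots> = (\<Sum>l<n. lam l) * h (f theta v) - (\<Sum>l<n. lam l * y (i l)) * f theta v"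
    by (simp add: sum_distrib_right)
  finally have "(\<Sum>l<n. lam l * loss h f theta (v, y (i l))) = (\<Sum>l<n. lam l) * h (f theta v) - (\<Sum>l<n. lam l * y (i l)) * f theta v" .
  then show ?thesis using s unfolding loss_def by simp
qed

lemma lhs_eq:
  "nmix_loss n alpha m h f theta x y
     = (\<Sum>l<n. alpha l / (\<Sum>i<n. alpha i) * integral\<^sup>L (dirichlet n (dir_shift n alpha l)) Psi)"
proof -
  let ?A = "\<Sum>i<n. alpha i"
  let ?D = "dirichlet n alpha"
  let ?D' = "\<lambda>l. dirichlet n (alpha(l := alpha l + 1))"
  let ?G = "\<lambda>i l lam. loss h f theta (\<Sum>k<n. lam k *\<^sub>R x (i k), y (i l))"
  have yl: "\<And>i l. i \<in> PI \<Longrightarrow> l < n \<Longrightarrow> \<bar>y (i l)\<bar> \<le> Ym" using PI_lt yb by blast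
  have step1: "\<And>i. i \<in> PI \<Longrightarrow> integral\<^sup>L ?D (\<lambda>lam. loss h f theta (\<Sum>k<n. lam k *\<^sub>R x (i k), \<Sum>k<n. lam k * y (i k)))
      = (\<Sum>l<n. alpha l / ?A * integral\<^sup>L (?D' l) (?G i l))"
  proof -
    fix i assume i: "i \<in> PI"
    have "integral\<^sup>L ?D (\<lambda>lam. loss h f theta (\<Sum>k<n. lam k *\<^sub>R x (i k), \<Sum>k<n. lam k * y (i k)))
        = integral\<^sup>L ?D (\<lambda>lam. \<Sum>l<n. lam l * ?G i l lam)"
      by (rule dir_integral_cong[OF n1 posa loss_meas[OF V_meas Y_meas]])
         (auto intro!: borel_measurable_sum borel_measurable_times comp_QQ G_meas simp: loss_split)
    also have "\<dots> = (\<Sum>l<n. integral\<^sup>L ?D (\<lambda>lam. lam l * ?G i l lam))"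
      by (rule Bochner_Integration.integral_sum) (use int_lamG[OF posa PI_lt[OF i] yl[OF i]] in auto)
    also have "\<dots> = (\<Sum>l<n. alpha l / ?A * integral\<^sup>L (?D' l) (?G i l))"
      by (intro sum.cong refl dir_reweight_int[OF n1 posa] G_meas) simp
    finally show "integral\<^sup>L ?D (\<lambda>lam. loss h f theta (\<Sum>k<n. lam k *\<^sub>R x (i k), \<Sum>k<n. lam k * y (i k)))
      = (\<Sum>l<n. alpha l / ?A * integral\<^sup>L (?D' l) (?G i l))" .
  qed
  have step2: "\<And>l. l < n \<Longrightarrow> 1 / real m ^ n * (\<Sum>i\<in>PI. integral\<^sup>L (?D' l) (?G i l))
      = integral\<^sup>L (dirichlet n (dir_shift n alpha l)) Psi"
  proof -
    fix l assume l: "l < n"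
    have "1 / real m ^ n * (\<Sum>i\<in>PI. integral\<^sup>L (?D' l) (?G i l))
        = integral\<^sup>L (?D' l) (\<lambda>mu. 1 / real m ^ n * (\<Sum>i\<in>PI. ?G i l mu))"
    proof -
      have "(\<Sum>i\<in>PI. integral\<^sup>L (?D' l) (?G i l)) = integral\<^sup>L (?D' l) (\<lambda>mu. \<Sum>i\<in>PI. ?G i l mu)"
        by (rule Bochner_Integration.integral_sum[symmetric]) (use int_G[OF pos_on_upd[OF posa] PI_lt yl] l in auto)
      then show ?thesis by simp
    qed
    also have "\<dots> = integral\<^sup>L (?D' l) (\<lambda>mu. Psi (restrict (mu \<circ> cyc n l) {..<n}))"
    proof (rule Bochner_Integration.integral_cong[OF refl])
      fix mu :: "nat \<Rightarrow> real"
      let ?beta = "\<lambda>i. restrict (i \<circ> cyc n l) {..<n}"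
      have bb: "bij_betw ?beta PI PI" unfolding PI_def by (rule PiE_perm_bij[OF cyc_bij[OF n1 l]])
      have cb: "bij_betw (cyc n l) {..<n} {..<n}" by (rule cyc_bij[OF n1 l])
      have cm: "\<And>k. k < n \<Longrightarrow> cyc n l k < n" using cb by (auto simp: bij_betw_def)
      have "(\<Sum>i\<in>PI. loss h f theta (\<Sum>k<n. restrict (mu \<circ> cyc n l) {..<n} k *\<^sub>R x (i k), y (i 0)))
          = (\<Sum>i\<in>PI. loss h f theta (\<Sum>k<n. restrict (mu \<circ> cyc n l) {..<n} k *\<^sub>R x (?beta i k), y (?beta i 0)))"
        by (rule sum.reindex_bij_betw[OF bb, symmetric])
      also have "\<dots> = (\<Sum>i\<in>PI. ?G i l mu)"
      proof (intro sum.cong refl)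
        fix i assume i: "i \<in> PI"
        have "(\<Sum>k<n. restrict (mu \<circ> cyc n l) {..<n} k *\<^sub>R x (?beta i k)) = (\<Sum>k<n. mu (cyc n l k) *\<^sub>R x (i (cyc n l k)))"
          by (intro sum.cong refl) auto
        also have "\<dots> = (\<Sum>k<n. mu k *\<^sub>R x (i k))"
          by (rule sum.reindex_bij_betw[OF cb, of "\<lambda>k. mu k *\<^sub>R x (i k)"])
        finally have e1: "(\<Sum>k<n. restrict (mu \<circ> cyc n l) {..<n} k *\<^sub>R x (?beta i k)) = (\<Sum>k<n. mu k *\<^sub>R x (i k))" .
        have e2: "?beta i 0 = i l" using n1 l by (simp add: cyc_def)
        show "loss h f theta (\<Sum>k<n. restrict (mu \<circ> cyc n l) {..<n} k *\<^sub>R x (?beta i k), y (?beta i 0)) = ?G i l mu"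
          unfolding e1 e2 ..
      qed
      finally show "1 / real m ^ n * (\<Sum>i\<in>PI. ?G i l mu) = Psi (restrict (mu \<circ> cyc n l) {..<n})"
        unfolding Psi_def by simp
    qed
    also have "\<dots> = integral\<^sup>L (dirichlet n (dir_shift n alpha l)) Psi"
      by (rule dir_shift_int[OF n1 posa l Psi_meas, symmetric])
    finally show "1 / real m ^ n * (\<Sum>i\<in>PI. integral\<^sup>L (?D' l) (?G i l))
      = integral\<^sup>L (dirichlet n (dir_shift n alpha l)) Psi" .
  qed
  have "nmix_loss n alpha m h f theta x y = 1 / real m ^ n * (\<Sum>i\<in>PI. \<Sum>l<n. alpha l / ?A * integral\<^sup>L (?D' l) (?G i l))"
    unfolding nmix_loss_def PI_def[symmetric] by (simp add: step1)
  also have "\<dots> = (\<Sum>l<n. alpha l / ?A * (1 / real m ^ n * (\<Sum>i\<in>PI. integral\<^sup>L (?D' l) (?G i l))))"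
    by (subst sum.swap) (simp add: sum_distrib_left algebra_simps)
  also have "\<dots> = (\<Sum>l<n. alpha l / ?A * integral\<^sup>L (dirichlet n (dir_shift n alpha l)) Psi)"
    by (intro sum.cong refl) (simp only: step2 lessThan_iff)
  finally show ?thesis .
qed

definition "KK = {1..<n}"
definition "PJ = PiE KK (\<lambda>_. {..<m})"
definition "dd lam t j = (\<Sum>k\<in>KK. lam k *\<^sub>R (x (j k) - x t))"
definition "aa t = h' (f theta (x t)) - y t"
definition "bb t = h'' (f theta (x t))"
definition "Er t = emp_mean_diff m x t"
definition "M2g t = 1 / real m * (\<Sum>s<m. (gradf (x t) \<bullet> (x s - x t))^2)"
definition "M2H t = 1 / real m * (\<Sum>s<m. (x s - x t) \<bullet> (hessf (x t) *v (x s - x t)))"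
definition "bc = 1 / real m * (\<Sum>t<m. aa t * (gradf (x t) \<bullet> Er t))"
definition "c2 = 1 / (2 * real m) * (\<Sum>t<m. bb t * M2g t + aa t * M2H t)"
definition "d2 = 1 / (2 * real m) * (\<Sum>t<m. bb t * (gradf (x t) \<bullet> Er t)^2 + aa t * (Er t \<bullet> (hessf (x t) *v Er t)))"
definition "S2 lam = (\<Sum>j\<in>{1..<n}. lam j ^ 2)"
definition "S2c lam = (1 - lam 0) ^ 2 - (\<Sum>j\<in>{1..<n}. lam j ^ 2)"

lemma lessThan_n_ins: "{..<n} = insert 0 KK"
  unfolding KK_def using n1 by auto

lemma Psi_split:
  assumes l: "lam \<in> Delta n"
  shows "Psi lam = 1 / real m * (\<Sum>t<m. 1 / real m ^ (n - 1) * (\<Sum>j\<in>PJ. loss h f theta (x t + dd lam t j, y t)))"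
proof -
  have s: "lam 0 = 1 - (\<Sum>k\<in>KK. lam k)"
    using l unfolding Delta_def lessThan_n_ins KK_def by simp
  have PIe: "PI = PiE (insert 0 KK) (\<lambda>_. {..<m})" unfolding PI_def lessThan_n_ins ..
  have z: "0 \<notin> KK" unfolding KK_def by simp
  have fK: "finite KK" unfolding KK_def by simp
  have "(\<Sum>i\<in>PI. loss h f theta (\<Sum>k<n. lam k *\<^sub>R x (i k), y (i 0)))
      = (\<Sum>t<m. \<Sum>j\<in>PJ. loss h f theta (\<Sum>k<n. lam k *\<^sub>R x ((j(0 := t)) k), y ((j(0 := t)) 0)))"
    unfolding PIe PJ_def by (rule sum_PiE_insert[OF fK z]) simp
  also have "\<dots> = (\<Sum>t<m. \<Sum>j\<in>PJ. loss h f theta (x t + dd lam t j, y t))"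
  proof (intro sum.cong refl)
    fix t j
    have "(\<Sum>k<n. lam k *\<^sub>R x ((j(0 := t)) k)) = lam 0 *\<^sub>R x t + (\<Sum>k\<in>KK. lam k *\<^sub>R x ((j(0 := t)) k))"
      unfolding lessThan_n_ins using fK z by simp
    also have "(\<Sum>k\<in>KK. lam k *\<^sub>R x ((j(0 := t)) k)) = (\<Sum>k\<in>KK. lam k *\<^sub>R x (j k))"
      using z by (intro sum.cong refl) auto
    also have "lam 0 *\<^sub>R x t + (\<Sum>k\<in>KK. lam k *\<^sub>R x (j k)) = x t + dd lam t j"
      unfolding dd_def s by (simp add: scaleR_diff_right sum_subtractf scaleR_sum_left[symmetric] algebra_simps)
    finally show "loss h f theta (\<Sum>k<n. lam k *\<^sub>R x ((j(0 := t)) k), y ((j(0 := t)) 0)) = loss h f theta (x t + dd lam t j, y t)"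
      by simp
  qed
  finally have e: "(\<Sum>i\<in>PI. loss h f theta (\<Sum>k<n. lam k *\<^sub>R x (i k), y (i 0)))
      = (\<Sum>t<m. \<Sum>j\<in>PJ. loss h f theta (x t + dd lam t j, y t))" .
  have p: "real m ^ n = real m * real m ^ (n - 1)" using n1 by (metis Suc_diff_le diff_Suc_1 power_Suc)
  show ?thesis unfolding Psi_def e p using m_pos by (simp add: sum_distrib_left)
qed

definition "Tp t u = loss h f theta (x t, y t) + aa t * (gradf (x t) \<bullet> u)
   + 1/2 * (bb t * (gradf (x t) \<bullet> u)^2 + aa t * (u \<bullet> (hessf (x t) *v u)))"

lemma rho_form: "mix_remainder n m h h' h'' f gradf hessf theta x y lam
   = 1 / real m * (\<Sum>t<m. 1 / real m ^ (n - 1) * (\<Sum>j\<in>PJ. loss h f theta (x t + dd lam t j, y t) - Tp t (dd lam t j)))"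
  unfolding mix_remainder_def Let_def PJ_def KK_def dd_def Tp_def aa_def bb_def ..

lemma avg_Tp:
  "1 / real m ^ (n - 1) * (\<Sum>j\<in>PJ. Tp t (dd lam t j))
   = loss h f theta (x t, y t) + aa t * (\<Sum>k\<in>KK. lam k) * (gradf (x t) \<bullet> Er t)
     + 1/2 * (bb t * (S2 lam * M2g t + ((\<Sum>k\<in>KK. lam k)^2 - S2 lam) * (gradf (x t) \<bullet> Er t)^2)
            + aa t * (S2 lam * M2H t + ((\<Sum>k\<in>KK. lam k)^2 - S2 lam) * (Er t \<bullet> (hessf (x t) *v Er t))))"
proof -
  have cK: "card KK = n - 1" unfolding KK_def by simp
  have fK: "finite KK" unfolding KK_def by simp
  note A = avg_T[OF fK m_pos, where w="\<lambda>s. x s - x t" and g="gradf (x t)" and H="hessf (x t)"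
      and Lc="loss h f theta (x t, y t)" and a="aa t" and b="bb t" and lam=lam]
  show ?thesis using A[unfolded Let_def cK]
    by (simp add: Tp_def dd_def S2_def Er_def emp_mean_diff_def M2g_def M2H_def PJ_def KK_def)
qed

lemma sum_KK: "lam \<in> Delta n \<Longrightarrow> (\<Sum>k\<in>KK. lam k) = 1 - lam 0"
  using n1 unfolding Delta_def KK_def by (simp add: lessThan_n_ins[unfolded KK_def])

lemma Psi_identity:
  assumes l: "lam \<in> Delta n"
  shows "Psi lam = std_loss m h f theta x y + bc * (1 - lam 0) + c2 * S2 lam + d2 * S2c lam
     + mix_remainder n m h h' h'' f gradf hessf theta x y lam"
proof -
  let ?M = "real m ^ (n - 1)"
  let ?s = "1 - lam 0"
  let ?L = "\<lambda>t j. loss h f theta (x t + dd lam t j, y t)"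
  let ?T = "\<lambda>t j. Tp t (dd lam t j)"
  have r: "mix_remainder n m h h' h'' f gradf hessf theta x y lam
      = 1 / real m * (\<Sum>t<m. 1 / ?M * (\<Sum>j\<in>PJ. ?L t j)) - 1 / real m * (\<Sum>t<m. 1 / ?M * (\<Sum>j\<in>PJ. ?T t j))"
    unfolding rho_form by (simp only: sum_subtractf right_diff_distrib)
  have "Psi lam - mix_remainder n m h h' h'' f gradf hessf theta x y lam
      = 1 / real m * (\<Sum>t<m. 1 / ?M * (\<Sum>j\<in>PJ. ?T t j))"
    unfolding Psi_split[OF l] r by simp
  also have "\<dots> = 1 / real m * (\<Sum>t<m. loss h f theta (x t, y t) + ?s * (aa t * (gradf (x t) \<bullet> Er t))
      + S2 lam * (1/2 * (bb t * M2g t + aa t * M2H t))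
      + (?s^2 - S2 lam) * (1/2 * (bb t * (gradf (x t) \<bullet> Er t)^2 + aa t * (Er t \<bullet> (hessf (x t) *v Er t)))))"
    by (intro arg_cong[where f="\<lambda>z. 1 / real m * z"] sum.cong refl)
       (simp only: avg_Tp sum_KK[OF l], simp add: field_simps)
  also have "\<dots> = std_loss m h f theta x y + bc * ?s + c2 * S2 lam + d2 * (?s^2 - S2 lam)"
    unfolding sum4 std_loss_def bc_def c2_def d2_def by (simp only: mult.commute)
  finally show ?thesis unfolding S2c_def S2_def by simp
qed

lemma dd_meas: "(\<lambda>lam. dd lam t j) \<in> borel_measurable (QQ n)"
  unfolding dd_def KK_def
  by (intro borel_measurable_sum borel_measurable_scaleR comp_QQ borel_measurable_const) auto

lemma Tp_meas: "(\<lambda>lam. Tp t (dd lam t j)) \<in> borel_measurable (QQ n)"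
proof -
  have hv: "(\<lambda>lam. hessf (x t) *v dd lam t j) \<in> borel_measurable (QQ n)"
    by (rule borel_measurable_continuous_on[OF matrix_vector_mult_linear_continuous_on dd_meas])
  show ?thesis unfolding Tp_def
    by (intro borel_measurable_add borel_measurable_times borel_measurable_const borel_measurable_inner
        borel_measurable_power dd_meas hv)
qed

lemma rho_meas: "mix_remainder n m h h' h'' f gradf hessf theta x y \<in> borel_measurable (QQ n)"
proof -
  have "mix_remainder n m h h' h'' f gradf hessf theta x y
     = (\<lambda>lam. 1 / real m * (\<Sum>t<m. 1 / real m ^ (n - 1) * (\<Sum>j\<in>PJ. loss h f theta (x t + dd lam t j, y t) - Tp t (dd lam t j))))"
    by (rule ext) (rule rho_form)
  also have "\<dots> \<in> borel_measurable (QQ n)"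
    by (intro borel_measurable_times borel_measurable_const borel_measurable_sum borel_measurable_diff Tp_meas
        loss_meas borel_measurable_add dd_meas)
  finally show ?thesis .
qed

lemma S2_meas: "S2 \<in> borel_measurable (QQ n)"
  unfolding S2_def[abs_def] by (intro borel_measurable_sum borel_measurable_power comp_QQ) auto

lemma S2c_meas: "S2c \<in> borel_measurable (QQ n)"
  unfolding S2c_def[abs_def] using n1
  by (intro borel_measurable_diff borel_measurable_sum borel_measurable_power comp_QQ borel_measurable_const) auto

lemma l0_meas: "(\<lambda>lam. 1 - lam 0) \<in> borel_measurable (QQ n)"
  using n1 by (intro borel_measurable_diff borel_measurable_const comp_QQ) auto

lemma S2_bound: "lam \<in> Delta n \<Longrightarrow> \<bar>S2 lam\<bar> \<le> real n"
proof -
  assume l: "lam \<in> Delta n"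
  have "S2 lam \<le> (\<Sum>j\<in>{1..<n}. 1)" unfolding S2_def
  proof (intro sum_mono)
    fix j assume "j \<in> {1..<n}"
    then have "0 \<le> lam j" "lam j \<le> 1" using Delta_le1[OF l, of j] by auto
    then show "lam j ^ 2 \<le> 1" by (simp add: power_le_one)
  qed
  moreover have "S2 lam \<ge> 0" unfolding S2_def by (intro sum_nonneg) auto
  ultimately show ?thesis by simp
qed

lemma l0_bound: "lam \<in> Delta n \<Longrightarrow> \<bar>1 - lam 0\<bar> \<le> 1"
  using Delta_le1[of lam n 0] n1 by auto

lemma S2c_bound: "lam \<in> Delta n \<Longrightarrow> \<bar>S2c lam\<bar> \<le> 1 + real n"
proof -
  assume l: "lam \<in> Delta n"
  have "\<bar>1 - lam 0\<bar>^2 \<le> 1" using l0_bound[OF l] by (intro power_le_one) auto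
  then have a: "(1 - lam 0)^2 \<le> 1" by simp
  have b: "0 \<le> (1 - lam 0)^2" by simp
  show ?thesis using S2_bound[OF l] a b unfolding S2c_def S2_def by (smt (verit))
qed

lemma Psi_bound: "\<exists>B. \<forall>lam\<in>Delta n. \<bar>Psi lam\<bar> \<le> B"
proof -
  obtain B where B: "\<forall>v yy. norm v \<le> Xm \<longrightarrow> \<bar>yy\<bar> \<le> Ym \<longrightarrow> \<bar>loss h f theta (v, yy)\<bar> \<le> B"
    using loss_bound by blast
  have cPI: "card PI = m ^ n" unfolding PI_def by (simp add: card_PiE_const)
  show ?thesis
  proof (intro exI[of _ B] ballI)
    fix lam assume l: "lam \<in> Delta n"
    have "\<bar>\<Sum>i\<in>PI. loss h f theta (\<Sum>k<n. lam k *\<^sub>R x (i k), y (i 0))\<bar> \<le> (\<Sum>i\<in>PI. B)"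
    proof (rule order.trans[OF sum_abs sum_mono])
      fix i assume i: "i \<in> PI"
      have "\<bar>y (i 0)\<bar> \<le> Ym" using PI_lt[OF i] n1 yb by auto
      then show "\<bar>loss h f theta (\<Sum>k<n. lam k *\<^sub>R x (i k), y (i 0))\<bar> \<le> B"
        using B V_bound[OF l PI_lt[OF i]] by blast
    qed
    also have "\<dots> = real m ^ n * B" using cPI by simp
    finally show "\<bar>Psi lam\<bar> \<le> B" unfolding Psi_def using m_pos by (simp add: abs_mult field_simps)
  qed
qed

definition "stdv = std_loss m h f theta x y"

lemma rho_bound: "\<exists>B. \<forall>lam\<in>Delta n. \<bar>mix_remainder n m h h' h'' f gradf hessf theta x y lam\<bar> \<le> B"
proof -
  obtain B where B: "\<forall>lam\<in>Delta n. \<bar>Psi lam\<bar> \<le> B" using Psi_bound by blast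
  show ?thesis
  proof (intro exI[of _ "B + \<bar>stdv\<bar> + \<bar>bc\<bar> + \<bar>c2\<bar> * real n + \<bar>d2\<bar> * (1 + real n)"] ballI)
    fix lam assume l: "lam \<in> Delta n"
    have e: "mix_remainder n m h h' h'' f gradf hessf theta x y lam = Psi lam - stdv - bc * (1 - lam 0) - c2 * S2 lam - d2 * S2c lam"
      using Psi_identity[OF l] unfolding stdv_def by simp
    have 1: "\<bar>bc * (1 - lam 0)\<bar> \<le> \<bar>bc\<bar>" using l0_bound[OF l] by (simp add: abs_mult mult_left_le)
    have 2: "\<bar>c2 * S2 lam\<bar> \<le> \<bar>c2\<bar> * real n" using S2_bound[OF l] by (simp add: abs_mult mult_left_mono)
    have 3: "\<bar>d2 * S2c lam\<bar> \<le> \<bar>d2\<bar> * (1 + real n)" using S2c_bound[OF l] by (simp add: abs_mult mult_left_mono)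
    show "\<bar>mix_remainder n m h h' h'' f gradf hessf theta x y lam\<bar> \<le> B + \<bar>stdv\<bar> + \<bar>bc\<bar> + \<bar>c2\<bar> * real n + \<bar>d2\<bar> * (1 + real n)"
      unfolding e using B l 1 2 3 by (smt (verit))
  qed
qed

lemma int_bd_meas:
  fixes g :: "(nat \<Rightarrow> real) \<Rightarrow> real"
  assumes p: "pos_on n b" and g: "g \<in> borel_measurable (QQ n)" and B: "\<And>lam. lam \<in> Delta n \<Longrightarrow> \<bar>g lam\<bar> \<le> Bd"
  shows "integrable (dirichlet n b) g"
  using int_bounded[OF p g] B by blast

lemma int_rho: "pos_on n b \<Longrightarrow> integrable (dirichlet n b) (mix_remainder n m h h' h'' f gradf hessf theta x y)"
  using int_bounded[OF _ rho_meas] rho_bound by blast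

lemma int_Psi: "pos_on n b \<Longrightarrow> integrable (dirichlet n b) Psi"
  using int_bounded[OF _ Psi_meas] Psi_bound by blast

lemma int_S2: assumes p: "pos_on n b" shows "integrable (dirichlet n b) S2"
  by (rule int_bd_meas[OF p S2_meas S2_bound])

lemma int_S2c: assumes p: "pos_on n b" shows "integrable (dirichlet n b) S2c"
  by (rule int_bd_meas[OF p S2c_meas S2c_bound])

lemma int_l0: assumes p: "pos_on n b" shows "integrable (dirichlet n b) (\<lambda>lam. 1 - lam 0)"
  by (rule int_bd_meas[OF p l0_meas]) (rule l0_bound)

lemma int_const: assumes p: "pos_on n b" shows "integrable (dirichlet n b) (\<lambda>_. c::real)"
  by (rule int_bd_meas[OF p, where Bd="\<bar>c\<bar>"]) auto

lemma integral_const_dir: "pos_on n b \<Longrightarrow> integral\<^sup>L (dirichlet n b) (\<lambda>_. c::real) = c"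
proof -
  assume p: "pos_on n b"
  have "integral\<^sup>L (dirichlet n b) (\<lambda>_. c) = (\<integral> mu. FF n b mu * c \<partial>PP n)"
    by (rule dir_integral[OF n1 p]) simp
  also have "\<dots> = integral\<^sup>L (PP n) (FF n b) * c" by (rule integral_mult_left_zero)
  also have "\<dots> = c" using FF_integral[OF n1 p] by simp
  finally show ?thesis .
qed

lemma integral_Psi:
  assumes p: "pos_on n b"
  shows "integral\<^sup>L (dirichlet n b) Psi = stdv + bc * integral\<^sup>L (dirichlet n b) (\<lambda>lam. 1 - lam 0)
      + c2 * integral\<^sup>L (dirichlet n b) S2 + d2 * integral\<^sup>L (dirichlet n b) S2c
      + integral\<^sup>L (dirichlet n b) (mix_remainder n m h h' h'' f gradf hessf theta x y)"
proof -
  let ?D = "dirichlet n b"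
  let ?r = "mix_remainder n m h h' h'' f gradf hessf theta x y"
  have "integral\<^sup>L ?D Psi = integral\<^sup>L ?D (\<lambda>lam. stdv + bc * (1 - lam 0) + c2 * S2 lam + d2 * S2c lam + ?r lam)"
    by (rule dir_integral_cong[OF n1 p Psi_meas])
       (auto intro!: borel_measurable_add borel_measurable_times l0_meas S2_meas S2c_meas rho_meas
         simp: Psi_identity stdv_def)
  also have "\<dots> = integral\<^sup>L ?D (\<lambda>_. stdv) + integral\<^sup>L ?D (\<lambda>lam. bc * (1 - lam 0))
      + integral\<^sup>L ?D (\<lambda>lam. c2 * S2 lam) + integral\<^sup>L ?D (\<lambda>lam. d2 * S2c lam) + integral\<^sup>L ?D ?r"
    using int_const[OF p] int_l0[OF p] int_S2[OF p] int_S2c[OF p] int_rho[OF p]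
    by (simp add: Bochner_Integration.integral_add)
  also have "\<dots> = stdv + bc * integral\<^sup>L ?D (\<lambda>lam. 1 - lam 0)
      + c2 * integral\<^sup>L ?D S2 + d2 * integral\<^sup>L ?D S2c + integral\<^sup>L ?D ?r"
    by (simp only: integral_const_dir[OF p] integral_mult_right_zero)
  finally show ?thesis .
qed

lemma pos_shift: "l < n \<Longrightarrow> pos_on n (dir_shift n alpha l)"
  using alpha_pos n1 by (auto simp: pos_on_def dir_shift_def add_pos_pos)

lemma main_concl:
  "let E = tilde_expect n alpha;
         Er = emp_mean_diff m x;
         S2 = E (\<lambda>lam. \<Sum>j\<in>{1..<n}. lam j ^ 2);
         S2c = E (\<lambda>lam. (1 - lam 0) ^ 2 - (\<Sum>j\<in>{1..<n}. lam j ^ 2));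
         R1 = E (\<lambda>lam. 1 - lam 0) / real m *
                (\<Sum>i<m. (h' (f theta (x i)) - y i) * (gradf (x i) \<bullet> Er i));
         R2 = S2 / (2 * real m) *
                (\<Sum>i<m. h'' (f theta (x i)) *
                   (gradf (x i) \<bullet> (((1 / real m) *\<^sub>R (\<Sum>j<m. outer (x j - x i) (x j - x i))) *v gradf (x i))))
              + S2c / (2 * real m) *
                (\<Sum>i<m. h'' (f theta (x i)) *
                   (gradf (x i) \<bullet> (outer (Er i) (Er i) *v gradf (x i))));
         R3 = S2 / (2 * real m) *
                (\<Sum>i<m. (h' (f theta (x i)) - y i) *
                   (1 / real m * (\<Sum>j<m. (x j - x i) \<bullet> (hessf (x i) *v (x j - x i)))))
              + S2c / (2 * real m) *
                (\<Sum>i<m. (h' (f theta (x i)) - y i) * (Er i \<bullet> (hessf (x i) *v Er i)));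
         rho = mix_remainder n m h h' h'' f gradf hessf theta x y
     in (\<forall>l<n. integrable (dirichlet n (dir_shift n alpha l)) rho)
        \<and> nmix_loss n alpha m h f theta x y
            = std_loss m h f theta x y + R1 + R2 + R3 + E rho
        \<and> (\<forall>e>0. \<exists>\<delta>>0. \<forall>lam. (\<forall>k<n. 0 \<le> lam k) \<and> (\<Sum>k<n. lam k) = 1
                 \<and> (\<Sum>k\<in>{1..<n}. lam k ^ 2) < \<delta>\<^sup>2
                 \<longrightarrow> \<bar>rho lam\<bar> \<le> e * (\<Sum>k\<in>{1..<n}. lam k ^ 2))"
proof -
  let ?r = "mix_remainder n m h h' h'' f gradf hessf theta x y"
  let ?A = "\<Sum>i<n. alpha i"
  let ?w = "\<lambda>l. alpha l / ?A"
  let ?I = "\<lambda>g l. integral\<^sup>L (dirichlet n (dir_shift n alpha l)) g"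
  let ?E = "tilde_expect n alpha"
  have Ed: "\<And>g. ?E g = (\<Sum>l<n. ?w l * ?I g l)" unfolding tilde_expect_def ..
  have A0: "?A > 0" using posa n1 unfolding pos_on_def
    by (intro sum_pos) (auto simp: lessThan_empty_iff)
  have sw: "(\<Sum>l<n. ?w l) = 1" using A0 by (simp add: sum_divide_distrib[symmetric])
  have part1: "\<forall>l<n. integrable (dirichlet n (dir_shift n alpha l)) ?r"
    using int_rho pos_shift by blast
  have "nmix_loss n alpha m h f theta x y = (\<Sum>l<n. ?w l * ?I Psi l)" by (rule lhs_eq)
  also have "\<dots> = (\<Sum>l<n. ?w l * (stdv + bc * ?I (\<lambda>lam. 1 - lam 0) l + c2 * ?I S2 l + d2 * ?I S2c l + ?I ?r l))"
    by (intro sum.cong refl) (simp only: integral_Psi[OF pos_shift] lessThan_iff)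
  also have "\<dots> = stdv + bc * ?E (\<lambda>lam. 1 - lam 0) + c2 * ?E S2 + d2 * ?E S2c + ?E ?r"
    unfolding sum5 sw Ed by simp
  finally have L: "nmix_loss n alpha m h f theta x y = stdv + bc * ?E (\<lambda>lam. 1 - lam 0) + c2 * ?E S2 + d2 * ?E S2c + ?E ?r" .
  have r2a: "(\<Sum>i<m. h'' (f theta (x i)) *
                   (gradf (x i) \<bullet> (((1 / real m) *\<^sub>R (\<Sum>j<m. outer (x j - x i) (x j - x i))) *v gradf (x i))))
          = (\<Sum>i<m. bb i * M2g i)"
    unfolding bb_def M2g_def by (simp only: inner_outer_sum)
  have r2b: "(\<Sum>i<m. h'' (f theta (x i)) * (gradf (x i) \<bullet> (outer (emp_mean_diff m x i) (emp_mean_diff m x i) *v gradf (x i))))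
          = (\<Sum>i<m. bb i * (gradf (x i) \<bullet> Er i)^2)"
    unfolding bb_def Er_def by (simp only: inner_outer)
  have r3a: "(\<Sum>i<m. (h' (f theta (x i)) - y i) * (1 / real m * (\<Sum>j<m. (x j - x i) \<bullet> (hessf (x i) *v (x j - x i)))))
          = (\<Sum>i<m. aa i * M2H i)"
    unfolding aa_def M2H_def ..
  have r3b: "(\<Sum>i<m. (h' (f theta (x i)) - y i) * (emp_mean_diff m x i \<bullet> (hessf (x i) *v emp_mean_diff m x i)))
          = (\<Sum>i<m. aa i * (Er i \<bullet> (hessf (x i) *v Er i)))"
    unfolding aa_def Er_def ..
  have r1: "(\<Sum>i<m. (h' (f theta (x i)) - y i) * (gradf (x i) \<bullet> emp_mean_diff m x i)) = (\<Sum>i<m. aa i * (gradf (x i) \<bullet> Er i))"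
    unfolding aa_def Er_def ..
  have c2e: "c2 = 1 / (2 * real m) * (\<Sum>i<m. bb i * M2g i) + 1 / (2 * real m) * (\<Sum>i<m. aa i * M2H i)"
    unfolding c2_def by (simp add: sum.distrib algebra_simps)
  have d2e: "d2 = 1 / (2 * real m) * (\<Sum>i<m. bb i * (gradf (x i) \<bullet> Er i)^2) + 1 / (2 * real m) * (\<Sum>i<m. aa i * (Er i \<bullet> (hessf (x i) *v Er i)))"
    unfolding d2_def by (simp add: sum.distrib algebra_simps)
  have S2e: "(\<lambda>lam. \<Sum>j\<in>{1..<n}. lam j ^ 2) = S2" unfolding S2_def[abs_def] ..
  have S2ce: "(\<lambda>lam. (1 - lam 0) ^ 2 - (\<Sum>j\<in>{1..<n}. lam j ^ 2)) = S2c" unfolding S2c_def[abs_def] ..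
  have part2: "nmix_loss n alpha m h f theta x y
     = std_loss m h f theta x y
       + ?E (\<lambda>lam. 1 - lam 0) / real m * (\<Sum>i<m. (h' (f theta (x i)) - y i) * (gradf (x i) \<bullet> emp_mean_diff m x i))
       + (?E (\<lambda>lam. \<Sum>j\<in>{1..<n}. lam j ^ 2) / (2 * real m) *
                (\<Sum>i<m. h'' (f theta (x i)) *
                   (gradf (x i) \<bullet> (((1 / real m) *\<^sub>R (\<Sum>j<m. outer (x j - x i) (x j - x i))) *v gradf (x i))))
              + ?E (\<lambda>lam. (1 - lam 0) ^ 2 - (\<Sum>j\<in>{1..<n}. lam j ^ 2)) / (2 * real m) *
                (\<Sum>i<m. h'' (f theta (x i)) *
                   (gradf (x i) \<bullet> (outer (emp_mean_diff m x i) (emp_mean_diff m x i) *v gradf (x i)))))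
       + (?E (\<lambda>lam. \<Sum>j\<in>{1..<n}. lam j ^ 2) / (2 * real m) *
                (\<Sum>i<m. (h' (f theta (x i)) - y i) *
                   (1 / real m * (\<Sum>j<m. (x j - x i) \<bullet> (hessf (x i) *v (x j - x i)))))
              + ?E (\<lambda>lam. (1 - lam 0) ^ 2 - (\<Sum>j\<in>{1..<n}. lam j ^ 2)) / (2 * real m) *
                (\<Sum>i<m. (h' (f theta (x i)) - y i) * (emp_mean_diff m x i \<bullet> (hessf (x i) *v emp_mean_diff m x i))))
       + ?E ?r"
    unfolding L r1 r2a r2b r3a r3b S2e S2ce c2e d2e bc_def stdv_def by (simp add: algebra_simps)
  have part3: "\<forall>e>0. \<exists>\<delta>>0. \<forall>lam. (\<forall>k<n. 0 \<le> lam k) \<and> (\<Sum>k<n. lam k) = 1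
                 \<and> (\<Sum>k\<in>{1..<n}. lam k ^ 2) < \<delta>\<^sup>2
                 \<longrightarrow> \<bar>?r lam\<bar> \<le> e * (\<Sum>k\<in>{1..<n}. lam k ^ 2)"
    by (rule rho_littleo[where n=n and x=x and y=y and f=f and theta=theta and gradf=gradf and hessf=hessf
        and h=h and h'=h' and h''=h'' and m=m, OF m_pos f_grad f_hess h_d1 h_d2])
  show ?thesis unfolding Let_def using part1 part2 part3 by blast
qed

end

theorem theorem5:
  fixes n m :: nat and alpha :: "nat \<Rightarrow> real"
    and x :: "nat \<Rightarrow> real^'p" and y :: "nat \<Rightarrow> real"
    and f :: "'t \<Rightarrow> real^'p \<Rightarrow> real" and theta :: 't
    and gradf :: "real^'p \<Rightarrow> real^'p" and hessf :: "real^'p \<Rightarrow> real^'p^'p"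
    and h h' h'' :: "real \<Rightarrow> real"
  assumes n2: "n \<ge> 2"
    and alpha_pos: "\<forall>k<n. alpha k > 0"
    and m_pos: "m > 0"
    and f_grad: "\<forall>z. (f theta has_derivative (\<lambda>v. gradf z \<bullet> v)) (at z)"
    and f_hess: "\<forall>z. (gradf has_derivative (\<lambda>v. hessf z *v v)) (at z)"
    and h_d1: "\<forall>t. (h has_real_derivative h' t) (at t)"
    and h_d2: "\<forall>t. (h' has_real_derivative h'' t) (at t)"
  shows
    "let E = tilde_expect n alpha;
         Er = emp_mean_diff m x;
         S2 = E (\<lambda>lam. \<Sum>j\<in>{1..<n}. lam j ^ 2);
         S2c = E (\<lambda>lam. (1 - lam 0) ^ 2 - (\<Sum>j\<in>{1..<n}. lam j ^ 2));
         R1 = E (\<lambda>lam. 1 - lam 0) / real m *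
                (\<Sum>i<m. (h' (f theta (x i)) - y i) * (gradf (x i) \<bullet> Er i));
         R2 = S2 / (2 * real m) *
                (\<Sum>i<m. h'' (f theta (x i)) *
                   (gradf (x i) \<bullet> (((1 / real m) *\<^sub>R (\<Sum>j<m. outer (x j - x i) (x j - x i))) *v gradf (x i))))
              + S2c / (2 * real m) *
                (\<Sum>i<m. h'' (f theta (x i)) *
                   (gradf (x i) \<bullet> (outer (Er i) (Er i) *v gradf (x i))));
         R3 = S2 / (2 * real m) *
                (\<Sum>i<m. (h' (f theta (x i)) - y i) *
                   (1 / real m * (\<Sum>j<m. (x j - x i) \<bullet> (hessf (x i) *v (x j - x i)))))
              + S2c / (2 * real m) *
                (\<Sum>i<m. (h' (f theta (x i)) - y i) * (Er i \<bullet> (hessf (x i) *v Er i)));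
         rho = mix_remainder n m h h' h'' f gradf hessf theta x y
     in (\<forall>l<n. integrable (dirichlet n (dir_shift n alpha l)) rho)
        \<and> nmix_loss n alpha m h f theta x y
            = std_loss m h f theta x y + R1 + R2 + R3 + E rho
        \<and> (\<forall>e>0. \<exists>\<delta>>0. \<forall>lam. (\<forall>k<n. 0 \<le> lam k) \<and> (\<Sum>k<n. lam k) = 1
                 \<and> (\<Sum>k\<in>{1..<n}. lam k ^ 2) < \<delta>\<^sup>2
                 \<longrightarrow> \<bar>rho lam\<bar> \<le> e * (\<Sum>k\<in>{1..<n}. lam k ^ 2))"
    by (rule main_concl[where n=n and alpha=alpha and m=m and x=x and y=y and f=f and theta=theta
      and gradf=gradf and hessf=hessf and h=h and h'=h' and h''=h'',
      OF n2 alpha_pos m_pos f_grad f_hess h_d1 h_d2])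

end
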